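(* Let $k\ge2$, $\beta>0$, $\lambda>0$, and $\mathcal A\subset\{1,\dots,p\}$ with $|\mathcal A|=k$. If \[ 2\lambda_n>\frac{g(\tau_n)}{G(\tau_n)}, \] where $G,g$ are the $N(0,1)$ cumulative distribution function and density, $\lambda_n=\lambda\sqrt n$ and $\tau_n=\sqrt n(\beta-\lambda)$, then $\frac{d}{dc}\psi_\lambda(c\mid k,\beta)\big|_{c=0}>0$. Hence there exists $c_\lambda>0$ with $\psi_\lambda(c_\lambda\mid k,\beta)>\psi_\lambda(0\mid k,\beta)$.
   Context: Fix integers $n\ge1$ and $2\le k<p$. $\mathbf J$ is an all-ones matrix; vector inequalities and absolute values are componentwise. For real $c$ with $-(k-1)^{-1}<c<1$ let $\mathbf C=(1-c)\mathbf I_p+c\mathbf J_p$. For $\mathcal A$ with complement $\mathcal I$ let $\mathbf C_{\mathcal A},\mathbf C_{\mathcal I},\mathbf C_{\mathcal I\mathcal A},\mathbf C_{\mathcal A\mathcal I}$ be the submatrices. For a sign vector $\boldsymbol z_{\mathcal A}\in\{-1,1\}^k$ with $\mathbf Z_{\mathcal A}=\mathrm{Diag}(\boldsymbol z_{\mathcal A})$ and $\boldsymbol\beta_{\mathcal A}$ with that sign vector: $P(S_\lambda\mid c,\boldsymbol\beta_{\mathcal A})=P(\boldsymbol u<\sqrt n\,\mathbf Z_{\mathcal A}\boldsymbol\beta_{\mathcal A})$ with $\boldsymbol u\sim N(\lambda\sqrt n\,\mathbf Z_{\mathcal A}\mathbf C_{\mathcal A}^{-1}\boldsymbol z_{\mathcal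 A},\ \mathbf Z_{\mathcal A}\mathbf C_{\mathcal A}^{-1}\mathbf Z_{\mathcal A})$; $P(I_\lambda\mid c,\boldsymbol z_{\mathcal A})=P(|\boldsymbol v|\le\lambda\sqrt n\mathbf 1)$ with $\boldsymbol v\sim N(\lambda\sqrt n\,\mathbf C_{\mathcal I\mathcal A}\mathbf C_{\mathcal A}^{-1}\boldsymbol z_{\mathcal A},\ \mathbf C_{\mathcal I}-\mathbf C_{\mathcal I\mathcal A}\mathbf C_{\mathcal A}^{-1}\mathbf C_{\mathcal A\mathcal I})$. The known-sign criterion is $\psi_\lambda(c\mid k,\beta)=P(S_\lambda\mid c,\boldsymbol\beta_{\mathcal A}=\beta\mathbf 1)\times P(I_\lambda\mid c,\boldsymbol z_{\mathcal A}=\mathbf 1)$ (its value does not depend on which $\mathcal A$ of size $k$ is used). *)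

theory Defs
  imports "HOL-Analysis.Analysis" "HOL-Probability.Probability"
begin

definition mvn_density :: "real^'n \<Rightarrow> real^'n^'n \<Rightarrow> real^'n \<Rightarrow> real" where
  "mvn_density mu Sig x =
     exp (- (1/2) * ((x - mu) \<bullet> (matrix_inv Sig *v (x - mu))))
     / sqrt ((2 * pi) ^ CARD('n) * det Sig)"

definition mvn_prob :: "real^'n \<Rightarrow> real^'n^'n \<Rightarrow> (real^'n) set \<Rightarrow> real" where
  "mvn_prob mu Sig S = (\<integral>x. indicator S x * mvn_density mu Sig x \<partial>lborel)"

definition Diag :: "real^'n \<Rightarrow> real^'n^'n" where
  "Diag z = (\<chi> i j. if i = j then z $ i else 0)"

text \<open>Equicorrelation matrix (1-c) I + c J, diagonal blocks C_A (index type 'a),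
  C_I (index type 'b), and off-diagonal blocks C_IA, C_AI (all entries c).\<close>
definition equicorr :: "real \<Rightarrow> real^'n^'n" where
  "equicorr c = (\<chi> i j. if i = j then 1 else c)"

definition offblock :: "real \<Rightarrow> real^'m^'n" where
  "offblock c = (\<chi> i j. c)"

definition PS :: "nat \<Rightarrow> real \<Rightarrow> real \<Rightarrow> real^'a \<Rightarrow> real" where
  "PS n lam c betaA =
     (let z = (\<chi> i. sgn (betaA $ i)); Z = Diag z; CAi = matrix_inv (equicorr c :: real^'a^'a)
      in mvn_prob ((lam * sqrt n) *\<^sub>R (Z *v (CAi *v z))) (Z ** CAi ** Z)
           {u. \<forall>i. u $ i < (sqrt n *\<^sub>R (Z *v betaA)) $ i})"

definition PI :: "nat \<Rightarrow> real \<Rightarrow> real \<Rightarrow> real^'a::finite \<Rightarrow> ('b::finite) itself \<Rightarrow> real" where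
  "PI n lam c z _ =
     (let CAi = matrix_inv (equicorr c :: real^'a^'a);
          CIA = (offblock c :: real^'a^'b); CAI = (offblock c :: real^'b^'a)
      in mvn_prob ((lam * sqrt n) *\<^sub>R (CIA *v (CAi *v z)))
           ((equicorr c :: real^'b^'b) - CIA ** CAi ** CAI)
           {v :: real^'b. \<forall>i. \<bar>v $ i\<bar> \<le> lam * sqrt n})"

text \<open>Known-sign criterion psi_lambda(c | k, beta), with k = CARD('a), p = CARD('a) + CARD('b).\<close>
definition psi :: "('a::finite) itself \<Rightarrow> ('b::finite) itself \<Rightarrow> nat \<Rightarrow> real \<Rightarrow> real \<Rightarrow> real \<Rightarrow> real" where
  "psi _ B n lam beta c =
     PS n lam c (\<chi> i::'a. beta) * PI n lam c (\<chi> i::'a. 1) B"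

definition std_normal_cdf :: "real \<Rightarrow> real" where
  "std_normal_cdf t = (\<integral>x. indicator {..t} x * std_normal_density x \<partial>lborel)"

end

theory Submission
  imports Defs "HOL-Real_Asymp.Real_Asymp"
begin

lemma integral_lborel_prod_Basis:
  fixes f :: "'a::euclidean_space \<Rightarrow> real \<Rightarrow> real"
  assumes int: "\<And>b. b \<in> Basis \<Longrightarrow> integrable lborel (f b)"
  shows "integrable lborel (\<lambda>x::'a. \<Prod>b\<in>Basis. f b (x \<bullet> b))"
    and "(\<integral>x. (\<Prod>b\<in>Basis. f b (x \<bullet> b)) \<partial>lborel) = (\<Prod>b\<in>Basis. \<integral>t. f b t \<partial>lborel)"
proof -
  interpret product_sigma_finite "\<lambda>_::'a. lborel :: real measure"
    by standard
  have eq: "(\<Prod>b\<in>Basis. f b ((\<Sum>b'\<in>Basis. g b' *\<^sub>R b') \<bullet> b)) = (\<Prod>b\<in>Basis. f b (g b))" for g :: "'a \<Rightarrow> real"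
    by (intro prod.cong refl) (simp add: inner_sum_left inner_Basis if_distrib sum.delta cong: if_cong)
  have meas: "(\<lambda>x::'a. \<Prod>b\<in>Basis. f b (x \<bullet> b)) \<in> borel_measurable borel"
    using int by (intro borel_measurable_prod) (auto intro!: measurable_compose[OF _ borel_measurable_integrable[OF int]])
  have meas2: "(\<lambda>f::'a\<Rightarrow>real. \<Sum>b\<in>Basis. f b *\<^sub>R b) \<in> measurable (\<Pi>\<^sub>M b\<in>Basis. lborel) borel"
    by measurable
  have pint: "integrable (\<Pi>\<^sub>M b\<in>Basis. lborel) (\<lambda>g. \<Prod>b\<in>Basis. f b (g b))"
    by (rule product_integrable_prod) (auto intro: int)
  show "integrable lborel (\<lambda>x::'a. \<Prod>b\<in>Basis. f b (x \<bullet> b))"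
    apply (subst lborel_eq)
    apply (subst integrable_distr_eq[OF meas2])
    using meas apply simp
    using pint by (simp add: eq)
  have "(\<integral>x. (\<Prod>b\<in>Basis. f b (x \<bullet> b)) \<partial>lborel) = (\<integral>g. (\<Prod>b\<in>Basis. f b (g b)) \<partial>(\<Pi>\<^sub>M b\<in>Basis. lborel))"
    apply (subst lborel_eq)
    apply (subst integral_distr[OF meas2])
    using meas apply simp
    by (simp add: eq)
  also have "\<dots> = (\<Prod>b\<in>Basis. \<integral>t. f b t \<partial>lborel)"
    by (rule product_integral_prod) (auto intro: int)
  finally show "(\<integral>x. (\<Prod>b\<in>Basis. f b (x \<bullet> b)) \<partial>lborel) = (\<Prod>b\<in>Basis. \<integral>t. f b t \<partial>lborel)" .
qed

lemma prod_Basis_vec: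
  fixes g :: "real^'n \<Rightarrow> 'c::comm_monoid_mult"
  shows "(\<Prod>b\<in>(Basis :: (real^'n) set). g b) = (\<Prod>i\<in>UNIV. g (axis i 1))"
proof -
  have B: "(Basis :: (real^'n) set) = (\<lambda>i. axis i 1) ` UNIV"
    by (auto simp: Basis_vec_def)
  have inj: "inj (\<lambda>i::'n. axis i (1::real))"
    by (auto simp: inj_def axis_eq_axis)
  have "prod g ((\<lambda>i. axis i 1) ` UNIV) = prod (g \<circ> (\<lambda>i. axis i 1)) UNIV"
    by (rule prod.reindex[OF inj])
  then show ?thesis by (simp only: B comp_def)
qed

lemma integral_vec_prod:
  fixes f :: "'n::finite \<Rightarrow> real \<Rightarrow> real"
  assumes int: "\<And>i. integrable lborel (f i)"
  shows "integrable lborel (\<lambda>x::real^'n. \<Prod>i\<in>UNIV. f i (x $ i))"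
    and "(\<integral>x. (\<Prod>i\<in>UNIV. f i (x $ i)) \<partial>(lborel :: (real^'n) measure)) = (\<Prod>i\<in>UNIV. \<integral>t. f i t \<partial>lborel)"
proof -
  define F where "F b = f (SOME i. b = axis i (1::real))" for b :: "real^'n"
  have F: "F (axis i 1) = f i" for i
    unfolding F_def by (rule arg_cong[where f=f]) (rule some_equality, auto simp: axis_eq_axis)
  have e1: "(\<Prod>i\<in>UNIV. f i (x $ i)) = (\<Prod>b\<in>Basis. F b (x \<bullet> b))" for x :: "real^'n"
    by (simp add: prod_Basis_vec F inner_axis)
  have e2: "(\<Prod>i\<in>UNIV. \<integral>t. f i t \<partial>lborel) = (\<Prod>b\<in>(Basis :: (real^'n) set). \<integral>t. F b t \<partial>lborel)"
    by (simp add: prod_Basis_vec F)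
  have intF: "b \<in> Basis \<Longrightarrow> integrable lborel (F b)" for b :: "real^'n"
    by (auto simp: Basis_vec_def F int)
  show "integrable lborel (\<lambda>x::real^'n. \<Prod>i\<in>UNIV. f i (x $ i))"
    unfolding e1 by (rule integral_lborel_prod_Basis(1)[OF intF])
  show "(\<integral>x. (\<Prod>i\<in>UNIV. f i (x $ i)) \<partial>(lborel :: (real^'n) measure)) = (\<Prod>i\<in>UNIV. \<integral>t. f i t \<partial>lborel)"
    unfolding e1 e2 by (rule integral_lborel_prod_Basis(2)[OF intF])
qed

definition EJ :: "real \<Rightarrow> real \<Rightarrow> real^'n^'n" where
  "EJ a b = (\<chi> i j. (if i = j then a else 0) + b)"

lemma EJ_nth: "EJ a b $ i $ j = (if i = j then a else 0) + b"
  by (simp add: EJ_def)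

lemma EJ_mul: "(EJ a b :: real^'n^'n) ** EJ a' b' = EJ (a*a') (a*b' + b*a' + real CARD('n)*b*b')"
  by (simp add: EJ_def matrix_matrix_mult_def vec_eq_iff sum.distrib
      if_distrib[where f="\<lambda>x. x * _"] if_distrib[where f="\<lambda>x. _ * x"] distrib_left distrib_right
      sum.delta algebra_simps cong: if_cong)

lemma EJ_mat1: "EJ 1 0 = mat 1"
  by (simp add: EJ_def mat_def vec_eq_iff)

lemma matrix_inv_eqI:
  fixes A B :: "real^'n^'n"
  assumes "A ** B = mat 1" "B ** A = mat 1"
  shows "matrix_inv A = B"
proof -
  have ex: "\<exists>A'. A ** A' = mat 1 \<and> A' ** A = mat 1" using assms by blast
  define A' where "A' = matrix_inv A"
  have A': "A ** A' = mat 1 \<and> A' ** A = mat 1"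
    unfolding A'_def matrix_inv_def by (rule someI_ex[OF ex])
  have "A' = A' ** (A ** B)" using assms by simp
  also have "\<dots> = (A' ** A) ** B" by (simp add: matrix_mul_assoc)
  also have "\<dots> = B" using A' by simp
  finally show ?thesis unfolding A'_def .
qed

lemma EJ_inv:
  assumes "a \<noteq> 0" "a + real CARD('n) * b \<noteq> 0"
  shows "matrix_inv (EJ a b :: real^'n^'n) = EJ (1/a) (- b / (a * (a + real CARD('n) * b)))"
proof (rule matrix_inv_eqI)
  have nz: "a * (a + real CARD('n) * b) \<noteq> 0" using assms by simp
  show "(EJ a b :: real^'n^'n) ** EJ (1/a) (- b / (a * (a + real CARD('n) * b))) = mat 1"
    unfolding EJ_mul EJ_mat1[symmetric] using assms nz
    by (intro arg_cong2[where f=EJ]) (auto simp: field_simps)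
  show "EJ (1/a) (- b / (a * (a + real CARD('n) * b))) ** (EJ a b :: real^'n^'n) = mat 1"
    unfolding EJ_mul EJ_mat1[symmetric] using assms nz
    by (intro arg_cong2[where f=EJ]) (auto simp: field_simps)
qed

lemma equicorr_EJ: "equicorr c = EJ (1 - c) c"
  by (simp add: equicorr_def EJ_def vec_eq_iff)

lemma Diag_one: "Diag (\<chi> i. 1) = EJ 1 0"
  by (simp add: Diag_def EJ_def vec_eq_iff)

lemma EJ_mulv: "(EJ a b :: real^'n^'n) *v v = (\<chi> i. a * v$i + b * sum (\<lambda>j. v$j) UNIV)"
  by (simp add: EJ_def matrix_vector_mult_def vec_eq_iff distrib_right sum.distrib
      if_distrib[where f="\<lambda>x. x * _"] sum_distrib_left cong: if_cong)

lemma offblock_EJ: "(offblock c :: real^'a^'b) ** (EJ a b :: real^'a^'a) = (\<chi> i j. c * (a + real CARD('a) * b))"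
  by (simp add: offblock_def EJ_def matrix_matrix_mult_def vec_eq_iff sum.distrib
      if_distrib[where f="\<lambda>x. _ * x"] distrib_left sum.delta cong: if_cong)

lemma const_offblock: "((\<chi> i j. x) :: real^'a^'b) ** (offblock c :: real^'b^'a) = (\<chi> i j. real CARD('a) * x * c)"
  by (simp add: offblock_def matrix_matrix_mult_def vec_eq_iff)

lemma offblock_mulv: "(offblock c :: real^'a^'b) *v v = (\<chi> i. c * sum (\<lambda>j. v$j) UNIV)"
  by (simp add: offblock_def matrix_vector_mult_def vec_eq_iff sum_distrib_left)

lemma EJ_minus_const: "(EJ a b :: real^'n^'n) - (\<chi> i j. x) = EJ a (b - x)"
  by (simp add: EJ_def vec_eq_iff)

lemma quad_EJ:
  fixes y :: "real^'n"
  shows "y \<bullet> (EJ a b *v y) = a * (\<Sum>i\<in>UNIV. (y$i)^2) + b * (\<Sum>i\<in>UNIV. y$i)^2"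
  by (simp add: EJ_mulv inner_vec_def power2_eq_square sum_distrib_left sum_distrib_right
      distrib_left sum.distrib algebra_simps)

definition detP :: "'n::finite itself \<Rightarrow> real \<Rightarrow> real \<Rightarrow> real" where
  "detP _ d e = (\<Sum>p\<in>{p. p permutes (UNIV::'n set) \<and> p \<noteq> id}.
      of_int (sign p) * d ^ card {i. p i = i} * e ^ (card {i. p i \<noteq> i} - 2))"

lemma card_moved_ge2:
  assumes "p permutes (UNIV::'n::finite set)" "p \<noteq> id"
  shows "card {i. p i \<noteq> i} \<ge> 2"
proof -
  obtain i where i: "p i \<noteq> i" using assms(2) by (auto simp: fun_eq_iff)
  have "p (p i) \<noteq> p i"
    using i permutes_inj[OF assms(1)] by (metis injD)
  then have "{i, p i} \<subseteq> {i. p i \<noteq> i}" using i by auto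
  then have "card {i, p i} \<le> card {i. p i \<noteq> i}" by (intro card_mono) auto
  then show ?thesis using i by auto
qed

lemma det_EJ_split:
  "det (EJ a b :: real^'n^'n) = (a + b) ^ CARD('n) + b^2 * detP TYPE('n::finite) (a + b) b"
proof -
  let ?S = "{p. p permutes (UNIV::'n set)}"
  let ?t = "\<lambda>p. of_int (sign p) * (\<Prod>i\<in>UNIV. (EJ a b :: real^'n^'n) $ i $ p i)"
  have fin: "finite ?S" by (rule finite_permutations) simp
  have idS: "id \<in> ?S" by simp
  have prodp: "(\<Prod>i\<in>UNIV. (EJ a b :: real^'n^'n) $ i $ p i) = (a+b) ^ card {i. p i = i} * b ^ card {i. p i \<noteq> i}" for p :: "'n \<Rightarrow> 'n"
  proof -
    have "(\<Prod>i\<in>UNIV. (EJ a b :: real^'n^'n) $ i $ p i) = (\<Prod>i\<in>UNIV. if p i = i then a + b else b)"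
      by (intro prod.cong) (auto simp: EJ_nth)
    also have "\<dots> = (\<Prod>i\<in>{i. p i = i}. a + b) * (\<Prod>i\<in>-{i. p i = i}. b)"
      by (subst prod.If_cases) auto
    also have "-{i. p i = i} = {i. p i \<noteq> i}" by auto
    finally show ?thesis by simp
  qed
  have "det (EJ a b :: real^'n^'n) = sum ?t ?S" by (simp add: det_def)
  also have "\<dots> = ?t id + sum ?t (?S - {id})"
    by (rule sum.remove[OF fin idS])
  also have "?t id = (a+b) ^ CARD('n)"
    by (simp add: EJ_nth)
  also have "sum ?t (?S - {id}) = b^2 * detP TYPE('n) (a + b) b"
    unfolding detP_def sum_distrib_left
  proof (intro sum.cong)
    show "?S - {id} = {p. p permutes (UNIV::'n set) \<and> p \<noteq> id}" by auto
    fix p assume "p \<in> {p. p permutes (UNIV::'n set) \<and> p \<noteq> id}"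
    then have c2: "card {i. p i \<noteq> i} \<ge> 2" using card_moved_ge2 by blast
    have "b ^ card {i. p i \<noteq> i} = b^2 * b ^ (card {i. p i \<noteq> i} - 2)"
      proof -
      obtain m where "card {i. p i \<noteq> i} = m + 2" using c2 by (metis le_add_diff_inverse2)
      then show ?thesis by (simp add: power_add power2_eq_square)
    qed
    then show "?t p = b\<^sup>2 * (of_int (sign p) * (a + b) ^ card {i. p i = i} * b ^ (card {i. p i \<noteq> i} - 2))"
      by (simp add: prodp)
  qed
  finally show ?thesis .
qed

lemma det_EJ_deriv:
  fixes a b :: "real \<Rightarrow> real"
  assumes dd: "((\<lambda>c. a c + b c) has_real_derivative 0) (at 0)"
    and d0: "a 0 + b 0 = 1" and b0: "b 0 = 0"
    and db: "(b has_real_derivative b1) (at 0)"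
  shows "((\<lambda>c. det (EJ (a c) (b c) :: real^'n::finite^'n)) has_real_derivative 0) (at 0)"
    and "det (EJ (a 0) (b 0) :: real^'n::finite^'n) = 1"
proof -
  define d where "d c = a c + b c" for c
  define P where "P c = detP TYPE('n) (d c) (b c)" for c
  have eq: "det (EJ (a c) (b c) :: real^'n^'n) = d c ^ CARD('n) + b c * b c * P c" for c
    by (simp add: det_EJ_split d_def P_def power2_eq_square)
  have contd: "isCont d 0" using DERIV_isCont[OF dd] unfolding d_def .
  have contb: "isCont b 0" using DERIV_isCont[OF db] .
  have contP: "isCont P 0"
    unfolding P_def detP_def
    by (intro continuous_intros contd contb)
  have D1: "((\<lambda>c. d c ^ CARD('n)) has_real_derivative 0) (at 0)"
    using DERIV_power[OF dd[folded d_def], of "CARD('n)"] by simp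
  have D2: "((\<lambda>c. b c * b c * P c) has_real_derivative 0) (at 0)"
    unfolding has_field_derivative_iff
  proof -
    have lim1: "((\<lambda>c. (b c - b 0) / (c - 0)) \<longlongrightarrow> b1) (at 0)"
      using db unfolding has_field_derivative_iff .
    have lim2: "(b \<longlongrightarrow> 0) (at 0)" using contb b0 by (simp add: isCont_def)
    have lim3: "(P \<longlongrightarrow> P 0) (at 0)" using contP by (simp add: isCont_def)
    have "((\<lambda>c. b c * ((b c - b 0) / (c - 0)) * P c) \<longlongrightarrow> 0 * b1 * P 0) (at 0)"
      by (intro tendsto_mult lim1 lim2 lim3)
    then show "((\<lambda>y. (b y * b y * P y - b 0 * b 0 * P 0) / (y - 0)) \<longlongrightarrow> 0) (at 0)"
      by (simp add: b0)
  qed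
  show "((\<lambda>c. det (EJ (a c) (b c) :: real^'n::finite^'n)) has_real_derivative 0) (at 0)"
    unfolding eq using DERIV_add[OF D1 D2] by simp
  show "det (EJ (a 0) (b 0) :: real^'n::finite^'n) = 1"
    unfolding eq using d0 b0 by (simp add: d_def)
qed

definition qv :: "real \<Rightarrow> real^'n \<Rightarrow> real" where
  "qv m x = (\<Sum>i\<in>UNIV. (x$i - m)^2)"
definition sv :: "real \<Rightarrow> real^'n \<Rightarrow> real" where
  "sv m x = (\<Sum>i\<in>UNIV. x$i - m)"
definition Qf :: "real \<Rightarrow> real \<Rightarrow> real \<Rightarrow> real^'n \<Rightarrow> real" where
  "Qf a b m x = a * qv m x + b * (sv m x)^2"
definition dQf :: "real \<Rightarrow> real \<Rightarrow> real \<Rightarrow> real \<Rightarrow> real \<Rightarrow> real \<Rightarrow> real^'n \<Rightarrow> real" where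
  "dQf a b m a' b' m' x = a' * qv m x - 2*a*m' * sv m x + b' * (sv m x)^2
      - 2*b*real CARD('n)*m' * sv m x"

lemma qv_expand: "qv m (x::real^'n) = (\<Sum>i\<in>UNIV. (x$i)^2) - 2*m*(\<Sum>i\<in>UNIV. x$i) + real CARD('n) * m^2"
  by (simp add: qv_def power2_diff sum.distrib sum_subtractf sum_distrib_left algebra_simps)

lemma sv_expand: "sv m (x::real^'n) = (\<Sum>i\<in>UNIV. x$i) - real CARD('n) * m"
  by (simp add: sv_def sum_subtractf)

lemma qv_nonneg: "qv m x \<ge> 0"
  by (simp add: qv_def sum_nonneg)

lemma sv_sq_le: "(sv m (x::real^'n))^2 \<le> real CARD('n) * qv m x"
  using sum_squared_le_sum_of_squares[of "\<lambda>i. x$i - m" UNIV]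
  by (simp add: sv_def qv_def mult.commute)

lemma Qf_deriv0:
  fixes x :: "real^'n"
  assumes dA: "(A has_real_derivative a') (at c)" and dB: "(B has_real_derivative b') (at c)"
    and dm: "(m has_real_derivative m') (at c)"
  shows "((\<lambda>c. Qf (A c) (B c) (m c) x) has_real_derivative dQf (A c) (B c) (m c) a' b' m' x) (at c)"
proof -
  define X1 where "X1 = (\<Sum>i\<in>UNIV. x$i)"
  define X2 where "X2 = (\<Sum>i\<in>UNIV. (x$i)^2)"
  define N where "N = real CARD('n)"
  have q: "qv mm x = X2 - 2*mm*X1 + N*mm^2" for mm unfolding qv_expand X1_def X2_def N_def ..
  have s: "sv mm x = X1 - N*mm" for mm unfolding sv_expand X1_def N_def ..
  have d1: "((\<lambda>c. X2 - 2*m c*X1 + N*(m c)^2) has_real_derivative (- 2*m'*X1 + N*(2*m c*m'))) (at c)"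
    by (auto intro!: derivative_eq_intros dm simp: algebra_simps)
  have d2: "((\<lambda>c. (X1 - N*m c)^2) has_real_derivative (2*(X1 - N*m c)*(- N*m'))) (at c)"
    by (auto intro!: derivative_eq_intros dm simp: algebra_simps)
  have d3: "((\<lambda>c. A c * (X2 - 2*m c*X1 + N*(m c)^2) + B c * (X1 - N*m c)^2) has_real_derivative
     (A c * (- 2*m'*X1 + N*(2*m c*m')) + a' * (X2 - 2*m c*X1 + N*(m c)^2)
      + (B c * (2*(X1 - N*m c)*(- N*m')) + b' * (X1 - N*m c)^2))) (at c)"
    by (intro DERIV_add DERIV_mult' dA dB d1 d2)
  show ?thesis
    unfolding Qf_def dQf_def q s N_def[symmetric]
    using d3 by (simp add: algebra_simps)
qed

lemma Qf_deriv:
  fixes x :: "real^'n"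
  assumes "(A has_real_derivative a') (at c)" "(B has_real_derivative b') (at c)"
    "(m has_real_derivative m') (at c)"
  shows "((\<lambda>c. exp (- Qf (A c) (B c) (m c) x / 2)) has_real_derivative
     exp (- Qf (A c) (B c) (m c) x / 2) * (- dQf (A c) (B c) (m c) a' b' m' x / 2)) (at c)"
  using DERIV_chain2[OF DERIV_exp DERIV_cdivide[OF DERIV_minus[OF Qf_deriv0[OF assms, of x]], of 2]]
  by simp

definition Wf :: "real \<Rightarrow> real^'n \<Rightarrow> real" where
  "Wf K x = exp (real CARD('n) * K^2 / 8) * (\<Prod>i\<in>UNIV. exp (- ((x$i)^2) / 16))"

definition LK :: "'n itself \<Rightarrow> real \<Rightarrow> real" where
  "LK _ K = 4 * (K + K * real CARD('n) + (2*K*K + 2*K*K*real CARD('n)) * (1 + real CARD('n)))"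

lemma q_lower:
  fixes x :: "real^'n"
  assumes "\<bar>m\<bar> \<le> K"
  shows "qv m x \<ge> (\<Sum>i\<in>UNIV. (x$i)^2) / 2 - real CARD('n) * K^2"
proof -
  have "(x$i)^2 / 2 - K^2 \<le> (x$i - m)^2" for i
  proof -
    have "m^2 \<le> K^2" using power_mono[OF assms, of 2] by simp
    moreover have "(x$i)^2 \<le> 2*(x$i - m)^2 + 2*m^2"
    proof -
      have "0 \<le> (x$i - 2*m)^2" by simp
      then show ?thesis by (simp add: power2_eq_square algebra_simps)
    qed
    ultimately show ?thesis by linarith
  qed
  then have "(\<Sum>i\<in>UNIV. (x$i)^2 / 2 - K^2) \<le> qv m x"
    unfolding qv_def by (intro sum_mono) auto
  then show ?thesis by (simp add: sum_subtractf sum_divide_distrib)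
qed

lemma expq_le_W:
  fixes x :: "real^'n"
  assumes "\<bar>m\<bar> \<le> K"
  shows "exp (- qv m x / 8) \<le> Wf K x"
proof -
  have "exp (- qv m x / 8) \<le> exp (real CARD('n) * K^2 / 8 + (- (\<Sum>i\<in>UNIV. (x$i)^2) / 16))"
    using q_lower[OF assms, of x] by simp
  also have "\<dots> = Wf K x"
    unfolding Wf_def exp_add by (simp add: exp_sum sum_negf[symmetric] sum_divide_distrib)
  finally show ?thesis .
qed

lemma Qf_bounds:
  fixes x :: "real^'n"
  assumes K: "\<bar>a\<bar> \<le> K" "\<bar>b\<bar> \<le> K" "\<bar>m\<bar> \<le> K" "\<bar>a'\<bar> \<le> K" "\<bar>b'\<bar> \<le> K" "\<bar>m'\<bar> \<le> K"
    and pos: "a - real CARD('n) * \<bar>b\<bar> \<ge> 1/2"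
  shows "exp (- Qf a b m x / 2) \<le> Wf K x"
    and "\<bar>exp (- Qf a b m x / 2) * (- dQf a b m a' b' m' x / 2)\<bar> \<le> LK TYPE('n) K * Wf K x"
proof -
  define N where "N = real CARD('n)"
  define q where "q = qv m x"
  define s where "s = sv m x"
  have q0: "q \<ge> 0" unfolding q_def by (rule qv_nonneg)
  have sq: "s^2 \<le> N * q" unfolding q_def s_def N_def by (rule sv_sq_le)
  have N0: "N \<ge> 0" unfolding N_def by simp
  have K0: "K \<ge> 0" using K(1) by linarith
  have Qge: "Qf a b m x \<ge> q / 2"
  proof -
    have "b * s^2 \<ge> - \<bar>b\<bar> * s^2"
    proof -
      have "-\<bar>b\<bar> \<le> b" by simp
      then show ?thesis by (intro mult_right_mono) auto
    qed
    moreover have "\<bar>b\<bar> * s^2 \<le> \<bar>b\<bar> * (N * q)" using sq by (intro mult_left_mono) auto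
    moreover have "(a - N * \<bar>b\<bar>) * q \<ge> 1/2 * q" using pos q0 unfolding N_def by (intro mult_right_mono) auto
    ultimately show ?thesis unfolding Qf_def q_def[symmetric] s_def[symmetric] by (simp add: algebra_simps)
  qed
  have e1: "exp (- Qf a b m x / 2) \<le> exp (- q / 4)" using Qge by simp
  have e2: "exp (- q / 4) \<le> exp (- q / 8)" using q0 by simp
  show "exp (- Qf a b m x / 2) \<le> Wf K x"
    using e1 e2 expq_le_W[OF K(3), of x] unfolding q_def by linarith
  define L0 where "L0 = K + K * N + (2*K*K + 2*K*K*N) * (1 + N)"
  have abss: "\<bar>s\<bar> \<le> 1 + N * q"
  proof -
    have "\<bar>s\<bar> \<le> 1 + s^2"
    proof -
      have "0 \<le> (\<bar>s\<bar> - 1/2)^2" by simp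
      moreover have "\<bar>s\<bar> * \<bar>s\<bar> = s * s" by (simp add: abs_mult_self_eq)
      ultimately show ?thesis by (simp add: power2_eq_square algebra_simps)
    qed
    then show ?thesis using sq by linarith
  qed
  have dQ: "\<bar>dQf a b m a' b' m' x\<bar> \<le> L0 * (1 + q)"
  proof -
    have t1: "\<bar>a' * q\<bar> \<le> K * q" using K(4) q0 by (simp add: abs_mult mult_right_mono)
    have t2: "\<bar>2*a*m' * s\<bar> \<le> 2*K*K * \<bar>s\<bar>"
    proof -
      have "\<bar>a\<bar>*\<bar>m'\<bar> \<le> K*K" using K(1,6) K0 by (intro mult_mono) auto
      then have "(\<bar>a\<bar>*\<bar>m'\<bar>) * (2*\<bar>s\<bar>) \<le> (K*K) * (2*\<bar>s\<bar>)" by (intro mult_right_mono) auto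
      then show ?thesis by (simp add: abs_mult algebra_simps)
    qed
    have t3: "\<bar>b' * s^2\<bar> \<le> K * (N * q)"
      using K(5) sq by (simp add: abs_mult mult_mono K0)
    have t4: "\<bar>2*b*N*m' * s\<bar> \<le> 2*K*K*N * \<bar>s\<bar>"
    proof -
      have "\<bar>b\<bar>*\<bar>m'\<bar> \<le> K*K" using K(2,6) K0 by (intro mult_mono) auto
      then have "(\<bar>b\<bar>*\<bar>m'\<bar>) * (2*N*\<bar>s\<bar>) \<le> (K*K) * (2*N*\<bar>s\<bar>)" using N0 by (intro mult_right_mono) auto
      then show ?thesis using N0 by (simp add: abs_mult algebra_simps)
    qed
    have "\<bar>dQf a b m a' b' m' x\<bar> \<le> K * q + 2*K*K*\<bar>s\<bar> + K * (N * q) + 2*K*K*N*\<bar>s\<bar>"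
      unfolding dQf_def q_def[symmetric] s_def[symmetric] N_def[symmetric]
      using t1 t2 t3 t4 by linarith
    also have "\<dots> = (K + K*N) * q + (2*K*K + 2*K*K*N) * \<bar>s\<bar>" by (simp add: algebra_simps)
    also have "\<dots> \<le> (K + K*N) * q + (2*K*K + 2*K*K*N) * (1 + N*q)"
      using abss K0 N0 by (intro add_left_mono mult_left_mono) auto
    also have "\<dots> \<le> L0 * (1 + q)"
    proof -
      have "(2*K*K + 2*K*K*N) * (1 + N*q) \<le> (2*K*K + 2*K*K*N) * ((1+N)*(1 + q))"
        using K0 N0 q0 by (intro mult_left_mono) (auto simp: algebra_simps)
      moreover have "(K + K*N) * q \<le> (K + K*N) * (1 + q)" using K0 N0 by (intro mult_left_mono) auto
      ultimately show ?thesis unfolding L0_def by (simp add: algebra_simps)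
    qed
    finally show ?thesis .
  qed
  have L00: "L0 \<ge> 0" unfolding L0_def using K0 N0 by simp
  have oq: "1 + q \<le> 8 * exp (q / 8)"
    using exp_ge_add_one_self[of "q/8"] by linarith
  have "\<bar>exp (- Qf a b m x / 2) * (- dQf a b m a' b' m' x / 2)\<bar>
        = exp (- Qf a b m x / 2) * \<bar>dQf a b m a' b' m' x\<bar> / 2" by (simp add: abs_mult)
  also have "\<dots> \<le> exp (- q / 4) * (L0 * (1 + q)) / 2"
    using e1 dQ by (intro divide_right_mono mult_mono) auto
  also have "\<dots> \<le> exp (- q / 4) * (L0 * (8 * exp (q / 8))) / 2"
    using oq L00 by (intro divide_right_mono mult_left_mono) auto
  also have "\<dots> = 4 * L0 * (exp (- q / 4) * exp (q / 8))" by simp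
  also have "exp (- q / 4) * exp (q / 8) = exp (- q / 8)" by (simp flip: exp_add)
  also have "4 * L0 * exp (- q / 8) \<le> 4 * L0 * Wf K x"
    using expq_le_W[OF K(3), of x] L00 unfolding q_def by (intro mult_left_mono) auto
  also have "4 * L0 = LK TYPE('n) K" unfolding LK_def L0_def N_def by simp
  finally show "\<bar>exp (- Qf a b m x / 2) * (- dQf a b m a' b' m' x / 2)\<bar> \<le> LK TYPE('n) K * Wf K x" .
qed

lemma meas_expQ: "(\<lambda>x::real^'n. exp (- Qf a b m x / 2)) \<in> borel_measurable borel"
  unfolding Qf_def qv_def sv_def by measurable

lemma meas_dQ: "(\<lambda>x::real^'n. dQf a b m a' b' m' x) \<in> borel_measurable borel"
  unfolding dQf_def qv_def sv_def by measurable

lemma integrable_exp16: "integrable lborel (\<lambda>t::real. exp (- (t^2) / 16))"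
proof -
  have "(\<lambda>t::real. exp (- (t^2) / 16)) = (\<lambda>t. sqrt (2 * pi * (sqrt 8)^2) * normal_density 0 (sqrt 8) t)"
    by (auto simp: normal_density_def fun_eq_iff)
  then show ?thesis by simp
qed

lemma integrable_Wf: "integrable lborel (Wf K :: real^'n \<Rightarrow> real)"
  unfolding Wf_def
  by (intro integrable_mult_right integral_vec_prod(1) integrable_exp16)

lemma deriv_integral:
  fixes A B m A' B' m' :: "real \<Rightarrow> real" and S :: "(real^'n) set"
  assumes S: "S \<in> sets borel" and dpos: "0 < d"
    and dA: "\<And>c. c \<in> {-d<..<d} \<Longrightarrow> (A has_real_derivative A' c) (at c)"
    and dB: "\<And>c. c \<in> {-d<..<d} \<Longrightarrow> (B has_real_derivative B' c) (at c)"
    and dm: "\<And>c. c \<in> {-d<..<d} \<Longrightarrow> (m has_real_derivative m' c) (at c)"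
    and K: "\<And>c. c \<in> {-d<..<d} \<Longrightarrow> \<bar>A c\<bar> \<le> K \<and> \<bar>B c\<bar> \<le> K \<and> \<bar>m c\<bar> \<le> K \<and> \<bar>A' c\<bar> \<le> K \<and> \<bar>B' c\<bar> \<le> K \<and> \<bar>m' c\<bar> \<le> K"
    and pos: "\<And>c. c \<in> {-d<..<d} \<Longrightarrow> A c - real CARD('n) * \<bar>B c\<bar> \<ge> 1/2"
  shows "((\<lambda>c. \<integral>x. indicator S x * exp (- Qf (A c) (B c) (m c) x / 2) \<partial>lborel) has_real_derivative
     (\<integral>x. indicator S x * (exp (- Qf (A 0) (B 0) (m 0) x / 2) *
         (- dQf (A 0) (B 0) (m 0) (A' 0) (B' 0) (m' 0) x / 2)) \<partial>lborel)) (at 0)"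
proof -
  define I where "I = {-d<..<d}"
  have I0: "0 \<in> I" using dpos by (simp add: I_def)
  have openI: "open I" by (simp add: I_def)
  have convI: "convex I" by (simp add: I_def)
  define g where "g c x = exp (- Qf (A c) (B c) (m c) x / 2)" for c and x :: "real^'n"
  define g' where "g' c x = g c x * (- dQf (A c) (B c) (m c) (A' c) (B' c) (m' c) x / 2)" for c and x :: "real^'n"
  define W where "W x = LK TYPE('n) K * Wf K x" for x :: "real^'n"
  define F where "F c = (\<integral>x. indicator S x * g c x \<partial>lborel)" for c
  have derivx: "((\<lambda>c. g c x) has_real_derivative g' c x) (at c)" if "c \<in> I" for c x
    unfolding g_def g'_def using that unfolding I_def by (intro Qf_deriv dA dB dm) auto
  have bg: "\<bar>g c x\<bar> \<le> Wf K x" if "c \<in> I" for c x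
    using Qf_bounds(1)[of "A c" K "B c" "m c" "A' c" "B' c" "m' c"] K[of c] pos[of c] that
    unfolding g_def I_def by auto
  have bg': "\<bar>g' c x\<bar> \<le> W x" if "c \<in> I" for c x
    using Qf_bounds(2)[of "A c" K "B c" "m c" "A' c" "B' c" "m' c"] K[of c] pos[of c] that
    unfolding g'_def g_def W_def I_def by auto
  have intW: "integrable lborel W" unfolding W_def by (intro integrable_mult_right integrable_Wf)
  have measg: "(\<lambda>x. indicator S x * g c x) \<in> borel_measurable borel" for c
    unfolding g_def by (intro borel_measurable_times borel_measurable_indicator S meas_expQ)
  have measg': "(\<lambda>x. indicator S x * g' c x) \<in> borel_measurable borel" for c
    unfolding g'_def g_def
    by (intro borel_measurable_times borel_measurable_indicator S meas_expQ meas_dQ borel_measurable_divide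
        borel_measurable_uminus borel_measurable_const)
  have intg: "integrable lborel (\<lambda>x. indicator S x * g c x)" if "c \<in> I" for c
  proof (rule Bochner_Integration.integrable_bound[OF integrable_Wf[of K]])
    show "(\<lambda>x. indicator S x * g c x) \<in> borel_measurable lborel" using measg by simp
    show "AE x in lborel. norm (indicator S x * g c x) \<le> norm (Wf K x)"
    proof (intro AE_I2)
      fix x :: "real^'n"
      have "norm (indicator S x * g c x) \<le> \<bar>g c x\<bar>" by (simp add: indicator_def)
      also have "\<dots> \<le> Wf K x" using bg[OF that] .
      also have "\<dots> \<le> norm (Wf K x)" by simp
      finally show "norm (indicator S x * g c x) \<le> norm (Wf K x)" .
    qed
  qed
  have mvt: "\<bar>g c x - g 0 x\<bar> \<le> W x * \<bar>c\<bar>" if "c \<in> I" for c x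
  proof -
    have "norm (g c x - g 0 x) \<le> W x * norm (c - 0)"
    proof (rule field_differentiable_bound[OF convI])
      show "((\<lambda>c. g c x) has_field_derivative g' z x) (at z within I)" if "z \<in> I" for z
        using derivx[OF that] by (rule has_field_derivative_at_within)
      show "norm (g' z x) \<le> W x" if "z \<in> I" for z using bg'[OF that] by simp
    qed (use that I0 in auto)
    then show ?thesis by simp
  qed
  define D where "D = (\<integral>x. indicator S x * g' 0 x \<partial>lborel)"
  have "((\<lambda>c. (F c - F 0) / (c - 0)) \<longlongrightarrow> D) (at 0 within I)"
    unfolding tendsto_at_iff_sequentially comp_def
  proof (intro allI impI)
    fix X :: "nat \<Rightarrow> real"
    assume XI: "\<forall>i. X i \<in> I - {0}" and X0: "X \<longlonglongrightarrow> 0"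
    define s where "s i x = indicator S x * ((g (X i) x - g 0 x) / X i)" for i x
    have eqF: "(F (X i) - F 0) / (X i - 0) = (\<integral>x. s i x \<partial>lborel)" for i
    proof -
      have "(\<integral>x. s i x \<partial>lborel) = (\<integral>x. (indicator S x * g (X i) x - indicator S x * g 0 x) / X i \<partial>lborel)"
        unfolding s_def by (simp add: algebra_simps diff_divide_distrib)
      also have "\<dots> = (\<integral>x. (indicator S x * g (X i) x - indicator S x * g 0 x) \<partial>lborel) / X i"
        by (rule integral_divide_zero)
      also have "\<dots> = (F (X i) - F 0) / X i"
      proof -
        have "X i \<in> I" using XI by auto
        then show ?thesis unfolding F_def using Bochner_Integration.integral_diff[OF intg intg[OF I0]] by simp
      qed
      finally show ?thesis by simp
    qed
    have lim: "(\<lambda>i. \<integral>x. s i x \<partial>lborel) \<longlonglongrightarrow> D"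
      unfolding D_def
    proof (rule integral_dominated_convergence[where w=W])
      show "(\<lambda>x. indicator S x * g' 0 x) \<in> borel_measurable lborel" using measg' by simp
      show "s i \<in> borel_measurable lborel" for i
        unfolding s_def g_def
        by (intro borel_measurable_times borel_measurable_indicator S meas_expQ borel_measurable_divide
            borel_measurable_diff borel_measurable_const) (simp_all add: S meas_expQ[simplified])
      show "integrable lborel W" by (rule intW)
      show "AE x in lborel. (\<lambda>i. s i x) \<longlonglongrightarrow> indicator S x * g' 0 x"
      proof (intro AE_I2)
        fix x
        have l1: "((\<lambda>c. (g c x - g 0 x) / (c - 0)) \<longlongrightarrow> g' 0 x) (at 0)"
          using derivx[OF I0, of x] unfolding has_field_derivative_iff .
        have l2: "filterlim X (at 0) sequentially"
          using XI X0 by (auto simp: filterlim_at)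
        have "(\<lambda>i. (g (X i) x - g 0 x) / (X i - 0)) \<longlonglongrightarrow> g' 0 x"
          using filterlim_compose[OF l1 l2] by simp
        then show "(\<lambda>i. s i x) \<longlonglongrightarrow> indicator S x * g' 0 x"
          unfolding s_def by (intro tendsto_mult tendsto_const) simp
      qed
      show "AE x in lborel. norm (s i x) \<le> W x" for i
      proof (intro AE_I2)
        fix x
        have Xi: "X i \<in> I" "X i \<noteq> 0" using XI by auto
        have "norm (s i x) \<le> \<bar>g (X i) x - g 0 x\<bar> / \<bar>X i\<bar>"
          unfolding s_def by (simp add: indicator_def abs_divide)
        also have "\<dots> \<le> W x * \<bar>X i\<bar> / \<bar>X i\<bar>"
          using mvt[OF Xi(1)] by (intro divide_right_mono) auto
        also have "\<dots> = W x" using Xi by simp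
        finally show "norm (s i x) \<le> W x" .
      qed
    qed
    show "(\<lambda>i. (F (X i) - F 0) / (X i - 0)) \<longlonglongrightarrow> D"
      unfolding eqF by (rule lim)
  qed
  then have "((\<lambda>c. (F c - F 0) / (c - 0)) \<longlongrightarrow> D) (at 0)"
    using at_within_open[OF I0 openI] by simp
  then have "(F has_real_derivative D) (at 0)"
    unfolding has_field_derivative_iff .
  then show ?thesis unfolding F_def D_def g_def g'_def .
qed

lemma prod_if1: "(\<Prod>l\<in>(UNIV::'n::finite set). if l = i then a else b) = a * b ^ (CARD('n) - 1)"
proof -
  have "(\<Prod>l\<in>UNIV. if l = i then a else b) = (\<Prod>l\<in>UNIV \<inter> {l. l = i}. a) * (\<Prod>l\<in>UNIV \<inter> - {l. l = i}. b)"
    by (rule prod.If_cases) simp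
  also have "UNIV \<inter> {l. l = i} = {i}" by auto
  also have "UNIV \<inter> - {l. l = i} = UNIV - {i}" by auto
  finally show ?thesis by (simp add: card_Diff_subset)
qed

lemma prod_if2:
  assumes "i \<noteq> j"
  shows "(\<Prod>l\<in>(UNIV::'n::finite set). if l = i \<or> l = j then a else b) = a^2 * b ^ (CARD('n) - 2)"
proof -
  have "(\<Prod>l\<in>UNIV. if l = i \<or> l = j then a else b) = (\<Prod>l\<in>UNIV \<inter> {l. l = i \<or> l = j}. a) * (\<Prod>l\<in>UNIV \<inter> - {l. l = i \<or> l = j}. b)"
    by (rule prod.If_cases) simp
  also have "UNIV \<inter> {l. l = i \<or> l = j} = {i, j}" by auto
  also have "UNIV \<inter> - {l. l = i \<or> l = j} = UNIV - {i, j}" by auto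
  finally show ?thesis using assms by (simp add: card_Diff_subset power2_eq_square numeral_2_eq_2)
qed

lemma integrable_phi:
  assumes T: "T \<in> sets borel"
  shows "integrable lborel (\<lambda>t::real. indicator T t * exp (- ((t - m0)^2) / 2))"
    and "integrable lborel (\<lambda>t::real. indicator T t * exp (- ((t - m0)^2) / 2) * (t - m0))"
proof -
  have e0: "(\<lambda>t::real. exp (- ((t - m0)^2) / 2)) = (\<lambda>t. sqrt (2 * pi) * normal_density m0 1 t)"
    by (auto simp: normal_density_def fun_eq_iff)
  have i0: "integrable lborel (\<lambda>t::real. exp (- ((t - m0)^2) / 2))"
    unfolding e0 by (intro integrable_mult_right integrable_normal_density) simp
  have e1: "(\<lambda>t::real. exp (- ((t - m0)^2) / 2) * (t - m0)) = (\<lambda>t. sqrt (2 * pi) * (normal_density m0 1 t * (t - m0)^1))"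
    by (auto simp: normal_density_def fun_eq_iff)
  have i1: "integrable lborel (\<lambda>t::real. exp (- ((t - m0)^2) / 2) * (t - m0))"
    unfolding e1 by (intro integrable_mult_right integrable_normal_moment) simp
  show "integrable lborel (\<lambda>t::real. indicator T t * exp (- ((t - m0)^2) / 2))"
    using integrable_mult_indicator[OF _ i0, of T] T by simp
  show "integrable lborel (\<lambda>t::real. indicator T t * exp (- ((t - m0)^2) / 2) * (t - m0))"
    using integrable_mult_indicator[OF _ i1, of T] T by (simp add: mult.assoc)
qed

lemma D_value:
  fixes T :: "real set" and m0 B1 m1 :: real
  assumes T: "T \<in> sets borel"
  defines "I0 \<equiv> (\<integral>t. indicator T t * exp (- ((t - m0)^2) / 2) \<partial>lborel)"
    and "I1 \<equiv> (\<integral>t. indicator T t * exp (- ((t - m0)^2) / 2) * (t - m0) \<partial>lborel)"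
  shows "(\<integral>x. indicator {x. \<forall>i. x$i \<in> T} x *
            (exp (- Qf 1 0 m0 x / 2) * (- dQf 1 0 m0 (-B1) B1 m1 x / 2)) \<partial>(lborel :: (real^'n) measure))
       = - B1 / 2 * (real CARD('n) * (real CARD('n) - 1) * I1^2 * I0^(CARD('n) - 2))
         + m1 * (real CARD('n) * I1 * I0^(CARD('n) - 1))"
proof -
  define p0 where "p0 = (\<lambda>t::real. indicator T t * exp (- ((t - m0)^2) / 2))"
  define p1 where "p1 = (\<lambda>t::real. indicator T t * exp (- ((t - m0)^2) / 2) * (t - m0))"
  have I0p: "integral\<^sup>L lborel p0 = I0" unfolding I0_def p0_def ..
  have I1p: "integral\<^sup>L lborel p1 = I1" unfolding I1_def p1_def ..
  have ip0: "integrable lborel p0" unfolding p0_def by (rule integrable_phi(1)[OF T])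
  have ip1: "integrable lborel p1" unfolding p1_def by (rule integrable_phi(2)[OF T])
  define P1 where "P1 i x = (\<Prod>l\<in>UNIV. (if l = i then p1 else p0) (x$l))" for i and x :: "real^'n"
  define P2 where "P2 i j x = (\<Prod>l\<in>UNIV. (if l = i \<or> l = j then p1 else p0) (x$l))" for i j and x :: "real^'n"
  have iP1: "integrable lborel (P1 i)" for i
    unfolding P1_def by (rule integral_vec_prod(1)) (auto intro: ip0 ip1)
  have iP2: "integrable lborel (P2 i j)" for i j
    unfolding P2_def by (rule integral_vec_prod(1)) (auto intro: ip0 ip1)
  have IP1: "(\<integral>x. P1 i x \<partial>lborel) = I1 * I0 ^ (CARD('n) - 1)" for i
  proof -
    have "(\<integral>x. P1 i x \<partial>lborel) = (\<Prod>l\<in>UNIV. \<integral>t. (if l = i then p1 else p0) t \<partial>lborel)"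
      unfolding P1_def by (rule integral_vec_prod(2)) (auto intro: ip0 ip1)
    also have "\<dots> = (\<Prod>l\<in>(UNIV::'n set). if l = i then I1 else I0)"
      by (intro prod.cong) (auto simp: I0p I1p)
    finally show ?thesis by (simp add: prod_if1)
  qed
  have IP2: "(\<integral>x. P2 i j x \<partial>lborel) = I1^2 * I0 ^ (CARD('n) - 2)" if "i \<noteq> j" for i j
  proof -
    have "(\<integral>x. P2 i j x \<partial>lborel) = (\<Prod>l\<in>UNIV. \<integral>t. (if l = i \<or> l = j then p1 else p0) t \<partial>lborel)"
      unfolding P2_def by (rule integral_vec_prod(2)) (auto intro: ip0 ip1)
    also have "\<dots> = (\<Prod>l\<in>(UNIV::'n set). if l = i \<or> l = j then I1 else I0)"
      by (intro prod.cong) (auto simp: I0p I1p)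
    finally show ?thesis using prod_if2[OF that] by simp
  qed
  have pw: "indicator {x. \<forall>i. x$i \<in> T} x * (exp (- Qf 1 0 m0 x / 2) * (- dQf 1 0 m0 (-B1) B1 m1 x / 2))
     = - B1 / 2 * (\<Sum>i\<in>UNIV. \<Sum>j\<in>UNIV - {i}. P2 i j x) + m1 * (\<Sum>i\<in>UNIV. P1 i x)" for x :: "real^'n"
  proof -
    define y where "y l = x$l - m0" for l
    define E where "E = (\<Prod>l\<in>UNIV. p0 (x$l))"
    have E: "E = indicator {x. \<forall>i. x$i \<in> T} x * exp (- Qf 1 0 m0 x / 2)"
    proof -
      have "E = (\<Prod>l\<in>UNIV. indicator T (x$l)) * (\<Prod>l\<in>UNIV. exp (- ((x$l - m0)^2) / 2))"
        unfolding E_def p0_def by (rule prod.distrib)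
      also have "(\<Prod>l\<in>UNIV. indicator T (x$l)) = (indicator {x. \<forall>i. x$i \<in> T} x :: real)"
      proof (cases "\<forall>i. x$i \<in> T")
        case True then show ?thesis by (simp add: indicator_def)
      next
        case False
        then obtain i where "x$i \<notin> T" by auto
        then have "(\<Prod>l\<in>UNIV. indicator T (x$l) :: real) = 0"
          by (intro prod_zero) (auto intro!: exI[of _ i])
        then show ?thesis using False by (simp add: indicator_def)
      qed
      also have "(\<Prod>l\<in>UNIV. exp (- ((x$l - m0)^2) / 2)) = exp (- Qf 1 0 m0 x / 2)"
        by (simp add: Qf_def qv_def exp_sum[symmetric] sum_negf[symmetric] sum_divide_distrib)
      finally show ?thesis .
    qed
    have P1e: "P1 i x = E * y i" for i
    proof -
      have "P1 i x = (\<Prod>l\<in>UNIV. p0 (x$l) * (if l = i then y l else 1))"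
        unfolding P1_def by (intro prod.cong) (auto simp: p0_def p1_def y_def)
      also have "\<dots> = E * (\<Prod>l\<in>UNIV. if l = i then y l else 1)"
        unfolding E_def by (rule prod.distrib)
      finally show ?thesis by simp
    qed
    have P2e: "P2 i j x = E * (y i * y j)" if "i \<noteq> j" for i j
    proof -
      have "P2 i j x = (\<Prod>l\<in>UNIV. p0 (x$l) * ((if l = i then y l else 1) * (if l = j then y l else 1)))"
        unfolding P2_def using that by (intro prod.cong) (auto simp: p0_def p1_def y_def)
      also have "\<dots> = E * ((\<Prod>l\<in>UNIV. if l = i then y l else 1) * (\<Prod>l\<in>UNIV. if l = j then y l else 1))"
        unfolding E_def by (simp add: prod.distrib)
      finally show ?thesis by simp
    qed
    have sq: "(sv m0 x)^2 - qv m0 x = (\<Sum>i\<in>UNIV. \<Sum>j\<in>UNIV - {i}. y i * y j)"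
    proof -
      have "(sv m0 x)^2 = (\<Sum>i\<in>UNIV. \<Sum>j\<in>UNIV. y i * y j)"
        unfolding sv_def y_def power2_eq_square sum_product ..
      moreover have "qv m0 x = (\<Sum>i\<in>UNIV. y i * y i)"
        unfolding qv_def y_def power2_eq_square ..
      moreover have "(\<Sum>j\<in>UNIV. y i * y j) = y i * y i + (\<Sum>j\<in>UNIV - {i}. y i * y j)" for i
        by (rule sum.remove) auto
      ultimately show ?thesis by (simp add: sum.distrib)
    qed
    have dq: "dQf 1 0 m0 (-B1) B1 m1 x = B1 * ((sv m0 x)^2 - qv m0 x) - 2 * m1 * (\<Sum>i\<in>UNIV. y i)"
      unfolding dQf_def sv_def y_def by (simp add: algebra_simps)
    have "indicator {x. \<forall>i. x$i \<in> T} x * (exp (- Qf 1 0 m0 x / 2) * (- dQf 1 0 m0 (-B1) B1 m1 x / 2))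
       = E * (- dQf 1 0 m0 (-B1) B1 m1 x / 2)" by (simp add: E)
    also have "\<dots> = - B1 / 2 * (E * (\<Sum>i\<in>UNIV. \<Sum>j\<in>UNIV - {i}. y i * y j)) + m1 * (E * (\<Sum>i\<in>UNIV. y i))"
      unfolding dq sq by (simp add: field_simps)
    also have "\<dots> = - B1 / 2 * (\<Sum>i\<in>UNIV. \<Sum>j\<in>UNIV - {i}. E * (y i * y j)) + m1 * (\<Sum>i\<in>UNIV. E * y i)"
      by (simp only: sum_distrib_left)
    also have "(\<Sum>i\<in>UNIV. \<Sum>j\<in>UNIV - {i}. E * (y i * y j)) = (\<Sum>i\<in>UNIV. \<Sum>j\<in>UNIV - {i}. P2 i j x)"
      by (intro sum.cong refl) (auto simp: P2e)
    also have "(\<Sum>i\<in>UNIV. E * y i) = (\<Sum>i\<in>UNIV. P1 i x)" by (simp add: P1e)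
    finally show ?thesis .
  qed
  have "(\<integral>x. indicator {x. \<forall>i. x$i \<in> T} x *
            (exp (- Qf 1 0 m0 x / 2) * (- dQf 1 0 m0 (-B1) B1 m1 x / 2)) \<partial>(lborel :: (real^'n) measure))
     = (\<integral>x. - B1 / 2 * (\<Sum>i\<in>UNIV. \<Sum>j\<in>UNIV - {i}. P2 i j x) + m1 * (\<Sum>i\<in>UNIV. P1 i x) \<partial>lborel)"
    by (simp only: pw)
  also have "\<dots> = - B1 / 2 * (\<Sum>i\<in>UNIV. \<Sum>j\<in>UNIV - {i}. \<integral>x. P2 i j x \<partial>lborel) + m1 * (\<Sum>i\<in>UNIV. \<integral>x. P1 i x \<partial>lborel)"
    using iP1 iP2 by (simp add: integral_sum)
  also have "(\<Sum>i\<in>UNIV. \<Sum>j\<in>UNIV - {i}. \<integral>x. P2 i j x \<partial>lborel) = (\<Sum>i\<in>(UNIV::'n set). \<Sum>j\<in>UNIV - {i}. I1^2 * I0 ^ (CARD('n) - 2))"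
    by (intro sum.cong refl) (auto simp: IP2)
  also have "\<dots> = real CARD('n) * (real CARD('n) - 1) * I1^2 * I0^(CARD('n) - 2)"
    by (simp add: card_Diff_subset of_nat_diff)
  also have "(\<Sum>i\<in>UNIV. \<integral>x. P1 i x \<partial>lborel) = real CARD('n) * I1 * I0^(CARD('n) - 1)"
    by (simp add: IP1)
  finally show ?thesis .
qed

lemma deriv_gauss: "((\<lambda>t. - exp (- ((t - mu)^2) / 2)) has_real_derivative exp (- ((x - mu)^2) / 2) * (x - mu)) (at x)"
proof -
  have d1: "((\<lambda>t. - ((t - mu)^2) / 2) has_real_derivative (- (x - mu))) (at x)"
    by (auto intro!: derivative_eq_intros) (simp add: field_simps)
  have d3: "((\<lambda>t. - exp (- ((t - mu)^2) / 2)) has_real_derivative - (exp (- ((x - mu)^2) / 2) * (- (x - mu)))) (at x)"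
    by (rule DERIV_minus[OF DERIV_chain2[OF DERIV_exp d1]])
  have aux: "\<And>E::real. - (E * (- (x - mu))) = E * (x - mu)" by (simp add: algebra_simps)
  show ?thesis by (rule DERIV_cong[OF d3 aux])
qed

lemma I1_halfline:
  fixes t0 mu :: real
  shows "(\<integral>t. indicator {..<t0} t * exp (- ((t - mu)^2) / 2) * (t - mu) \<partial>lborel) = - exp (- ((t0 - mu)^2) / 2)"
proof -
  define f where "f t = exp (- ((t - mu)^2) / 2) * (t - mu)" for t
  define F where "F t = - exp (- ((t - mu)^2) / 2)" for t
  have e1: "(\<lambda>t::real. exp (- ((t - mu)^2) / 2) * (t - mu)) = (\<lambda>t. sqrt (2 * pi) * (normal_density mu 1 t * (t - mu)^1))"
    by (auto simp: normal_density_def fun_eq_iff)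
  have i1: "integrable lborel f"
    unfolding f_def e1 by (intro integrable_mult_right integrable_normal_moment) simp
  have "(LBINT x = - \<infinity>..ereal t0. f x) = F t0 - 0"
  proof (rule interval_integral_FTC_integrable)
    show "- \<infinity> < ereal t0" by simp
    show "(F has_vector_derivative f x) (at x)" for x
    proof -
      have "(F has_real_derivative f x) (at x)" unfolding F_def f_def by (rule deriv_gauss)
      then show ?thesis by (simp add: has_real_derivative_iff_has_vector_derivative)
    qed
    show "isCont f x" for x unfolding f_def by (intro continuous_intros) auto
    show "set_integrable lborel (einterval (- \<infinity>) (ereal t0)) f"
      unfolding set_integrable_def using integrable_mult_indicator[OF _ i1, of "einterval (- \<infinity>) (ereal t0)"]
      by simp
    show "((F \<circ> real_of_ereal) \<longlongrightarrow> 0) (at_right (- \<infinity>))"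
      unfolding ereal_tendsto_simps F_def by real_asymp
    have "isCont F t0" unfolding F_def by (intro continuous_intros) auto
    then have "(F \<longlongrightarrow> F t0) (at_left t0)"
      by (simp add: isCont_def filterlim_at_split)
    then show "((F \<circ> real_of_ereal) \<longlongrightarrow> F t0) (at_left (ereal t0))"
      unfolding ereal_tendsto_simps .
  qed
  moreover have "(LBINT x = - \<infinity>..ereal t0. f x) = (\<integral>t. indicator {..<t0} t * f t \<partial>lborel)"
    by (simp add: interval_lebesgue_integral_def set_lebesgue_integral_def)
  ultimately show ?thesis by (simp add: f_def F_def mult.assoc)
qed

lemma I0_halfline:
  fixes t0 mu :: real
  shows "(\<integral>t. indicator {..<t0} t * exp (- ((t - mu)^2) / 2) \<partial>lborel) = sqrt (2 * pi) * std_normal_cdf (t0 - mu)"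
proof -
  have "(\<integral>t. indicator {..<t0} t * exp (- ((t - mu)^2) / 2) \<partial>lborel)
      = (\<integral>s. indicator {..<t0} (mu + 1 * s) * exp (- (((mu + 1 * s) - mu)^2) / 2) \<partial>lborel)"
    using lborel_integral_real_affine[of 1 "\<lambda>t. indicator {..<t0} t * exp (- ((t - mu)^2) / 2)" mu] by simp
  also have "\<dots> = (\<integral>s. indicator {..t0 - mu} s * exp (- (s^2) / 2) \<partial>lborel)"
  proof (rule integral_cong_AE)
    show "AE s in lborel. indicator {..<t0} (mu + 1 * s) * exp (- (((mu + 1 * s) - mu)^2) / 2)
            = indicator {..t0 - mu} s * exp (- (s^2) / 2)"
      using AE_lborel_singleton[of "t0 - mu"]
      by eventually_elim (auto simp: indicator_def)
  qed auto
  also have "\<dots> = (\<integral>s. sqrt (2 * pi) * (indicator {..t0 - mu} s * std_normal_density s) \<partial>lborel)"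
    by (intro Bochner_Integration.integral_cong refl) (simp add: std_normal_density_def)
  also have "\<dots> = sqrt (2 * pi) * std_normal_cdf (t0 - mu)"
    unfolding std_normal_cdf_def by (rule integral_mult_right_zero)
  finally show ?thesis .
qed

lemma std_normal_cdf_pos: "std_normal_cdf x > 0"
proof -
  define M where "M = exp (- ((\<bar>x\<bar> + 1)^2) / 2) / sqrt (2 * pi)"
  have M0: "M > 0" unfolding M_def by simp
  have int2: "integrable lborel (\<lambda>s. indicator {..x} s * std_normal_density s)"
    using integrable_mult_indicator[of "{..x}" lborel std_normal_density] by simp
  have "M = (\<integral>s. indicator {x - 1..x} s * M \<partial>lborel)"
    by simp
  also have "\<dots> \<le> (\<integral>s. indicator {..x} s * std_normal_density s \<partial>lborel)"
  proof (rule integral_mono)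
    show "integrable lborel (\<lambda>s. indicator {x - 1..x} s * M)"
      by (intro integrable_mult_left) (simp add: integrable_indicator_iff)
    show "integrable lborel (\<lambda>s. indicator {..x} s * std_normal_density s)" by (rule int2)
    fix s
    show "indicator {x - 1..x} s * M \<le> indicator {..x} s * std_normal_density s"
    proof (cases "s \<in> {x - 1..x}")
      case True
      then have "\<bar>s\<bar> \<le> \<bar>x\<bar> + 1" by auto
      then have "s^2 \<le> (\<bar>x\<bar> + 1)^2"
        using power_mono[of "\<bar>s\<bar>" "\<bar>x\<bar> + 1" 2] by simp
      then have "exp (- ((\<bar>x\<bar> + 1)^2) / 2) \<le> exp (- (s^2) / 2)" by simp
      then show ?thesis using True
        by (simp add: M_def std_normal_density_def indicator_def divide_right_mono)
    next
      case False
      then show ?thesis by (simp add: indicator_def normal_density_nonneg)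
    qed
  qed
  finally show ?thesis unfolding std_normal_cdf_def using M0 by linarith
qed

lemma I1_sym:
  fixes a :: real
  shows "(\<integral>t. indicator {-a..a} t * exp (- ((t - 0)^2) / 2) * (t - 0) \<partial>lborel) = 0"
proof -
  define f where "f = (\<lambda>t::real. indicator {-a..a} t * exp (- (t^2) / 2) * t)"
  have "integral\<^sup>L lborel f = \<bar>-1\<bar> * (\<integral>s. f (0 + (-1) * s) \<partial>lborel)"
    using lborel_integral_real_affine[of "-1" f 0] by simp
  also have "(\<lambda>s. f (0 + (-1) * s)) = (\<lambda>s. - f s)"
    by (auto simp: f_def fun_eq_iff indicator_def)
  finally have "integral\<^sup>L lborel f = - integral\<^sup>L lborel f" by simp
  then have "integral\<^sup>L lborel f = 0" by simp
  then show ?thesis by (simp add: f_def)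
qed

lemma I0_sym_pos:
  fixes a :: real
  assumes "a > 0"
  shows "(\<integral>t. indicator {-a..a} t * exp (- ((t - 0)^2) / 2) \<partial>lborel) > 0"
proof -
  define M where "M = exp (- (a^2) / 2)"
  have M0: "M > 0" unfolding M_def by simp
  have e0: "(\<lambda>t::real. exp (- ((t - 0)^2) / 2)) = (\<lambda>t. sqrt (2 * pi) * normal_density 0 1 t)"
    by (auto simp: normal_density_def fun_eq_iff)
  have i0: "integrable lborel (\<lambda>t::real. exp (- ((t - 0)^2) / 2))"
    unfolding e0 by (intro integrable_mult_right integrable_normal_density) simp
  have "0 < 2 * a * M" using assms M0 by simp
  also have "2 * a * M = (\<integral>s. indicator {-a..a} s * M \<partial>lborel)"
  proof -
    have "-a \<le> a" using assms by simp
    then show ?thesis by (simp add: emeasure_lborel_Icc_eq)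
  qed
  also have "\<dots> \<le> (\<integral>t. indicator {-a..a} t * exp (- ((t - 0)^2) / 2) \<partial>lborel)"
  proof (rule integral_mono)
    show "integrable lborel (\<lambda>s. indicator {-a..a} s * M)"
      by (intro integrable_mult_left) (simp add: integrable_indicator_iff emeasure_lborel_Icc_eq)
    show "integrable lborel (\<lambda>t. indicator {-a..a} t * exp (- ((t - 0)^2) / 2))"
      using integrable_mult_indicator[OF _ i0, of "{-a..a}"] by simp
    fix s
    show "indicator {-a..a} s * M \<le> indicator {-a..a} s * exp (- ((s - 0)^2) / 2)"
    proof (cases "s \<in> {-a..a}")
      case True
      then have "\<bar>s\<bar> \<le> a" by auto
      then have "s^2 \<le> a^2" using power_mono[of "\<bar>s\<bar>" a 2] by simp
      then have "exp (- (a^2) / 2) \<le> exp (- (s^2) / 2)" by simp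
      then show ?thesis using True by (simp add: M_def indicator_def)
    qed (auto simp: indicator_def)
  qed
  finally show ?thesis .
qed

lemma deriv_integral':
  fixes A B m A' B' m' :: "real \<Rightarrow> real" and S :: "(real^'n) set"
  assumes S: "S \<in> sets borel" and d0: "0 < d0"
    and dA: "\<And>c. c \<in> {-d0<..<d0} \<Longrightarrow> (A has_real_derivative A' c) (at c)"
    and dB: "\<And>c. c \<in> {-d0<..<d0} \<Longrightarrow> (B has_real_derivative B' c) (at c)"
    and dm: "\<And>c. c \<in> {-d0<..<d0} \<Longrightarrow> (m has_real_derivative m' c) (at c)"
    and cA: "isCont A' 0" and cB: "isCont B' 0" and cm: "isCont m' 0"
    and A0: "A 0 = 1" and B0: "B 0 = 0"
  shows "((\<lambda>c. \<integral>x. indicator S x * exp (- Qf (A c) (B c) (m c) x / 2) \<partial>lborel) has_real_derivative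
     (\<integral>x. indicator S x * (exp (- Qf (A 0) (B 0) (m 0) x / 2) *
         (- dQf (A 0) (B 0) (m 0) (A' 0) (B' 0) (m' 0) x / 2)) \<partial>lborel)) (at 0)"
proof -
  define N where "N = real CARD('n)"
  have N0: "N \<ge> 0" unfolding N_def by simp
  have I0: "0 \<in> {-d0<..<d0}" using d0 by simp
  have cA0: "isCont A 0" using DERIV_isCont[OF dA[OF I0]] .
  have cB0: "isCont B 0" using DERIV_isCont[OF dB[OF I0]] .
  have cm0: "isCont m 0" using DERIV_isCont[OF dm[OF I0]] .
  define e where "e = 1 / (4 * (N + 1))"
  have e0: "e > 0" unfolding e_def using N0 by simp
  have ev: "\<forall>\<^sub>F c in nhds 0. dist (A c) (A 0) < e \<and> dist (B c) (B 0) < e \<and> dist (m c) (m 0) < 1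
      \<and> dist (A' c) (A' 0) < 1 \<and> dist (B' c) (B' 0) < 1 \<and> dist (m' c) (m' 0) < 1 \<and> c \<in> {-d0<..<d0}"
  proof (intro eventually_conj)
    show "\<forall>\<^sub>F c in nhds 0. c \<in> {-d0<..<d0}"
      using I0 by (intro eventually_nhds_in_open) auto
  qed (use e0 cA0 cB0 cm0 cA cB cm in \<open>auto simp: isCont_def tendsto_at_iff_tendsto_nhds intro!: tendstoD\<close>)
  then obtain d where d: "d > 0" and dP: "\<And>c. dist c 0 < d \<Longrightarrow>
      dist (A c) (A 0) < e \<and> dist (B c) (B 0) < e \<and> dist (m c) (m 0) < 1
      \<and> dist (A' c) (A' 0) < 1 \<and> dist (B' c) (B' 0) < 1 \<and> dist (m' c) (m' 0) < 1 \<and> c \<in> {-d0<..<d0}"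
    unfolding eventually_nhds_metric by blast
  define K where "K = 2 + \<bar>m 0\<bar> + \<bar>A' 0\<bar> + \<bar>B' 0\<bar> + \<bar>m' 0\<bar>"
  have e1: "e \<le> 1/4" unfolding e_def using N0 by (simp add: field_simps)
  show ?thesis
  proof (rule deriv_integral[OF S d])
    fix c :: real assume c: "c \<in> {-d<..<d}"
    then have dc: "dist c 0 < d" by (simp add: dist_real_def abs_less_iff)
    note P = dP[OF dc]
    show "(A has_real_derivative A' c) (at c)" using P dA by blast
    show "(B has_real_derivative B' c) (at c)" using P dB by blast
    show "(m has_real_derivative m' c) (at c)" using P dm by blast
    show "\<bar>A c\<bar> \<le> K \<and> \<bar>B c\<bar> \<le> K \<and> \<bar>m c\<bar> \<le> K \<and> \<bar>A' c\<bar> \<le> K \<and> \<bar>B' c\<bar> \<le> K \<and> \<bar>m' c\<bar> \<le> K"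
    proof -
      have h: "\<bar>x\<bar> \<le> \<bar>x0\<bar> + 1" if "dist x x0 < 1" for x x0 :: real
        using abs_triangle_ineq[of "x - x0" x0] that by (simp add: dist_real_def)
      have hA: "\<bar>A c\<bar> \<le> 2" using h[of "A c" "A 0"] P A0 e1 by simp
      have hB: "\<bar>B c\<bar> \<le> 1" using h[of "B c" "B 0"] P B0 e1 by simp
      have hm: "\<bar>m c\<bar> \<le> \<bar>m 0\<bar> + 1" using h[of "m c" "m 0"] P by simp
      have hA': "\<bar>A' c\<bar> \<le> \<bar>A' 0\<bar> + 1" using h[of "A' c" "A' 0"] P by simp
      have hB': "\<bar>B' c\<bar> \<le> \<bar>B' 0\<bar> + 1" using h[of "B' c" "B' 0"] P by simp
      have hm': "\<bar>m' c\<bar> \<le> \<bar>m' 0\<bar> + 1" using h[of "m' c" "m' 0"] P by simp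
      have "\<bar>m 0\<bar> \<ge> 0" "\<bar>A' 0\<bar> \<ge> 0" "\<bar>B' 0\<bar> \<ge> 0" "\<bar>m' 0\<bar> \<ge> 0" by simp_all
      then show ?thesis using hA hB hm hA' hB' hm' unfolding K_def by (intro conjI; linarith)
    qed
    have "\<bar>B c\<bar> < e" using P B0 by (simp add: dist_real_def)
    then have "N * \<bar>B c\<bar> \<le> N * e" using N0 by (intro mult_left_mono) auto
    also have "N * e \<le> 1/4" unfolding e_def using N0 by (simp add: field_simps)
    finally have "N * \<bar>B c\<bar> \<le> 1/4" .
    moreover have "A c \<ge> 3/4" using P A0 e1 by (auto simp: dist_real_def)
    ultimately show "A c - real CARD('n) * \<bar>B c\<bar> \<ge> 1/2" unfolding N_def by linarith
  qed
qed

lemma mvn_prob_EJ: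
  fixes Sig :: "real^'n^'n" and mu :: "real^'n"
  assumes "matrix_inv Sig = EJ a b" and "mu = (\<chi> i. m)"
  shows "mvn_prob mu Sig S = (\<integral>x. indicator S x * exp (- Qf a b m x / 2) \<partial>lborel) / sqrt ((2 * pi) ^ CARD('n) * det Sig)"
proof -
  have q: "(x - mu) \<bullet> (matrix_inv Sig *v (x - mu)) = Qf a b m x" for x
    unfolding assms quad_EJ Qf_def qv_def sv_def by simp
  have "mvn_prob mu Sig S = (\<integral>x. indicator S x * exp (- Qf a b m x / 2) / sqrt ((2 * pi) ^ CARD('n) * det Sig) \<partial>lborel)"
    unfolding mvn_prob_def mvn_density_def q by simp
  also have "\<dots> = (\<integral>x. indicator S x * exp (- Qf a b m x / 2) \<partial>lborel) / sqrt ((2 * pi) ^ CARD('n) * det Sig)"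
    by (rule integral_divide_zero)
  finally show ?thesis .
qed

lemma albe_aux: "(D1::real) \<noteq> 0 \<Longrightarrow> D2 \<noteq> 0 \<Longrightarrow> 1/D1 - (D2 - D1)/(D1*D2) = 1/D2"
  by (simp add: field_simps)

lemma albe_aux2: "(D1::real) \<noteq> 0 \<Longrightarrow> D2 \<noteq> 0 \<Longrightarrow> - (- c / (D1 * D2)) / ((1/D1) * (1/D2)) = c"
  by (simp add: field_simps)

lemma sum_ones: "(\<Sum>j\<in>(UNIV::'n::finite set). (1::real)) = real CARD('n)" by simp

lemma PS_form:
  fixes beta :: real
  defines "k \<equiv> real CARD('a::finite)"
  assumes beta: "beta > 0" and c: "\<bar>c\<bar> * (2 * k) < 1"
  shows "PS n lam c (\<chi> i::'a. beta) =
    (\<integral>x. indicator {x::real^'a. \<forall>i. x$i \<in> {..<sqrt n * beta}} x *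
        exp (- Qf (1 - c) c (lam * sqrt n / (1 + (k - 1) * c)) x / 2) \<partial>lborel)
    / sqrt ((2 * pi) ^ CARD('a) * det (EJ (1 / (1 - c)) (- c / ((1 - c) * (1 - c + k * c))) :: real^'a^'a))"
proof -
  have k1: "k \<ge> 1" unfolding k_def by simp
  have "\<bar>c\<bar> * 1 \<le> \<bar>c\<bar> * k" using k1 by (intro mult_left_mono) auto
  then have c1: "\<bar>c\<bar> < 1/2" using c by linarith
  have ck: "\<bar>c * k\<bar> < 1/2" using c k1 by (simp add: abs_mult field_simps)
  have nz1: "1 - c \<noteq> 0" using c1 by auto
  have nz2: "1 - c + k * c \<noteq> 0" using c1 ck by (auto simp: abs_less_iff algebra_simps)
  have nz2': "(1 - c) + k * c > 0" using c1 ck by (auto simp: abs_less_iff algebra_simps)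
  define al where "al = 1 / (1 - c)"
  define be where "be = - c / ((1 - c) * (1 - c + k * c))"
  have inv1: "matrix_inv (equicorr c :: real^'a^'a) = EJ al be"
    unfolding equicorr_EJ al_def be_def k_def[symmetric]
    using EJ_inv[of "1 - c" c, where 'n='a] nz1 nz2 unfolding k_def by simp
  have albe: "al + k * be = 1 / (1 - c + k * c)"
  proof -
    have "al + k * be = 1/(1 - c) - (k * c)/((1 - c) * (1 - c + k * c))"
      unfolding al_def be_def by (simp add: algebra_simps)
    also have "\<dots> = 1 / (1 - c + k * c)"
      using albe_aux[OF nz1 nz2] by (simp only: add_diff_cancel_left')
    finally show ?thesis .
  qed
  have nzal: "al \<noteq> 0" unfolding al_def using nz1 by simp
  have nzal2: "al + k * be \<noteq> 0" unfolding albe using nz2 by simp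
  have inv2: "matrix_inv (EJ al be :: real^'a^'a) = EJ (1 - c) c"
  proof -
    have "matrix_inv (EJ al be :: real^'a^'a) = EJ (1/al) (- be / (al * (al + k * be)))"
      using EJ_inv[of al be, where 'n='a] nzal nzal2 unfolding k_def by simp
    moreover have "1/al = 1 - c" unfolding al_def using nz1 by simp
    moreover have "- be / (al * (al + k * be)) = c"
      unfolding albe unfolding al_def be_def by (rule albe_aux2[OF nz1 nz2])
    ultimately show ?thesis by simp
  qed
  have sgn1: "(\<chi> i::'a. sgn ((\<chi> i::'a. beta) $ i)) = (\<chi> i. 1)" using beta by (simp add: vec_eq_iff)
  have Z: "Diag (\<chi> i::'a. (1::real)) = mat 1" by (simp add: Diag_one EJ_mat1)
  have mu: "(lam * sqrt n) *\<^sub>R (mat 1 *v (EJ al be *v (\<chi> i::'a. 1))) = (\<chi> i::'a. lam * sqrt n / (1 + (k - 1) * c))"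
  proof -
    have "EJ al be *v (\<chi> i::'a. (1::real)) = (\<chi> i. al + be * k)"
      by (simp add: EJ_mulv k_def)
    moreover have "lam * sqrt n * (al + be * k) = lam * sqrt n / (1 + (k - 1) * c)"
      using albe by (simp add: algebra_simps)
    ultimately show ?thesis by (simp add: vec_eq_iff)
  qed
  have Sset: "{u. \<forall>i. u $ i < (sqrt n *\<^sub>R (mat 1 *v (\<chi> i::'a. beta))) $ i} = {x. \<forall>i. x$i \<in> {..<sqrt n * beta}}"
    by auto
  have "PS n lam c (\<chi> i::'a. beta) = mvn_prob (\<chi> i::'a. lam * sqrt n / (1 + (k - 1) * c)) (EJ al be)
      {x. \<forall>i. x$i \<in> {..<sqrt n * beta}}"
    unfolding PS_def Let_def sgn1 Z inv1 mu Sset by simp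
  also have "\<dots> = (\<integral>x. indicator {x::real^'a. \<forall>i. x$i \<in> {..<sqrt n * beta}} x *
        exp (- Qf (1 - c) c (lam * sqrt n / (1 + (k - 1) * c)) x / 2) \<partial>lborel)
    / sqrt ((2 * pi) ^ CARD('a) * det (EJ al be :: real^'a^'a))"
    by (rule mvn_prob_EJ[OF inv2 refl])
  finally show ?thesis unfolding al_def be_def .
qed

lemma gam_aux:
  assumes "(D2::real) \<noteq> 0" "D2 = 1 - c + k * c"
  shows "c - k * (c * (1 / D2)) * c = c * (1 - c) / D2"
proof -
  have "c - k * (c * (1 / D2)) * c = (c * D2 - k * c * c) / D2" using assms(1) by (simp add: field_simps)
  also have "c * D2 - k * c * c = c * (1 - c)" by (simp only: assms(2)) (simp add: algebra_simps)
  finally show ?thesis .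
qed

lemma binv_aux:
  fixes D1 D2 g :: real
  assumes "D1 \<noteq> 0" "D2 \<noteq> 0" "D2 + mm * c \<noteq> 0" "g = c * D1 / D2"
  shows "- g / (D1 * (D1 + mm * g)) = - c / (D1 * (D2 + mm * c))"
proof -
  have "D1 + mm * g = D1 * (D2 + mm * c) / D2" using assms by (simp add: field_simps)
  then have "- g / (D1 * (D1 + mm * g)) = - (c * D1 / D2) / (D1 * (D1 * (D2 + mm * c) / D2))"
    using assms(4) by simp
  also have "\<dots> = - c / (D1 * (D2 + mm * c))"
  proof -
    have aux: "\<And>Y. Y \<noteq> 0 \<Longrightarrow> - (c * D1 / D2) / (D1 * (D1 * Y / D2)) = - c / (D1 * Y)"
      using assms(1,2) by (simp add: field_simps)
    show ?thesis by (rule aux[OF assms(3)])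
  qed
  finally show ?thesis .
qed

lemma PI_form:
  defines "k \<equiv> real CARD('a::finite)" and "mm \<equiv> real CARD('b::finite)"
  assumes c: "\<bar>c\<bar> * (2 * (k + mm)) < 1"
  shows "PI n lam c (\<chi> i::'a. 1) TYPE('b) =
    (\<integral>x. indicator {x::real^'b. \<forall>i. x$i \<in> {- (lam * sqrt n)..lam * sqrt n}} x *
        exp (- Qf (1 / (1 - c)) (- c / ((1 - c) * (1 + (k + mm - 1) * c))) (lam * sqrt n * k * c / (1 + (k - 1) * c)) x / 2) \<partial>lborel)
    / sqrt ((2 * pi) ^ CARD('b) * det (EJ (1 - c) (c * (1 - c) / (1 + (k - 1) * c)) :: real^'b^'b))"
proof -
  have k1: "k \<ge> 1" unfolding k_def by simp
  have m1: "mm \<ge> 1" unfolding mm_def by simp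
  have "\<bar>c\<bar> * (2 * (k + mm)) = 2 * (\<bar>c\<bar> * (k + mm))" by (simp add: algebra_simps)
  then have ac: "\<bar>c\<bar> * (k + mm) < 1/2" using c by linarith
  have "\<bar>c\<bar> * 1 \<le> \<bar>c\<bar> * (k + mm)" using k1 m1 by (intro mult_left_mono) auto
  then have c1: "\<bar>c\<bar> < 1/2" using ac by linarith
  have "\<bar>(k - 1) * c\<bar> \<le> \<bar>c\<bar> * (k + mm)" using k1 m1 by (simp add: abs_mult mult.commute mult_left_mono)
  then have ck: "\<bar>(k - 1) * c\<bar> < 1/2" using ac by linarith
  have "\<bar>(k + mm - 1) * c\<bar> \<le> \<bar>c\<bar> * (k + mm)" using k1 m1 by (simp add: abs_mult mult.commute mult_left_mono)
  then have ckm: "\<bar>(k + mm - 1) * c\<bar> < 1/2" using ac by linarith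
  define D1 where "D1 = 1 - c"
  define D2 where "D2 = 1 + (k - 1) * c"
  have nz1: "D1 \<noteq> 0" unfolding D1_def using c1 by auto
  have nz2: "D2 \<noteq> 0" unfolding D2_def using ck by (auto simp: abs_less_iff)
  have nz3: "D2 + mm * c \<noteq> 0" unfolding D2_def using ckm by (auto simp: abs_less_iff algebra_simps)
  have D2e: "1 - c + k * c = D2" unfolding D2_def by (simp add: algebra_simps)
  define al where "al = 1 / (1 - c)"
  define be where "be = - c / ((1 - c) * (1 - c + k * c))"
  have inv1: "matrix_inv (equicorr c :: real^'a^'a) = EJ al be"
    unfolding equicorr_EJ al_def be_def
    using EJ_inv[of "1 - c" c, where 'n='a] nz1 nz2 D2e unfolding k_def D1_def by simp
  have albe: "al + k * be = 1 / D2"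
  proof -
    have "al + k * be = 1/(1 - c) - (k * c)/((1 - c) * (1 - c + k * c))"
      unfolding al_def be_def by (simp add: algebra_simps)
    also have "\<dots> = 1 / (1 - c + k * c)"
    proof -
      have n1: "1 - c \<noteq> 0" using nz1 unfolding D1_def .
      have n2: "1 - c + k * c \<noteq> 0" using nz2 D2e by simp
      show ?thesis using albe_aux[OF n1 n2] by (simp only: add_diff_cancel_left')
    qed
    finally show ?thesis unfolding D2e .
  qed
  have v1: "EJ al be *v (\<chi> i::'a. (1::real)) = (\<chi> i. 1 / D2)"
    using albe by (simp add: EJ_mulv k_def vec_eq_iff algebra_simps)
  have mu: "(lam * sqrt n) *\<^sub>R ((offblock c :: real^'a^'b) *v (EJ al be *v (\<chi> i::'a. 1)))
      = (\<chi> i::'b. lam * sqrt n * k * c / (1 + (k - 1) * c))"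
    unfolding v1 offblock_mulv by (simp add: vec_eq_iff k_def D2_def)
  define g where "g = c * (1 - c) / (1 + (k - 1) * c)"
  have Sig: "(equicorr c :: real^'b^'b) - (offblock c :: real^'a^'b) ** EJ al be ** (offblock c :: real^'b^'a)
      = EJ (1 - c) g"
  proof -
    have "(offblock c :: real^'a^'b) ** EJ al be = (\<chi> i j. c * (1 / D2))"
      unfolding offblock_EJ albe[unfolded k_def] ..
    then have f1: "(offblock c :: real^'a^'b) ** EJ al be ** (offblock c :: real^'b^'a) = (\<chi> i j. k * (c * (1 / D2)) * c)"
      by (simp add: const_offblock k_def)
    have f2: "c - k * (c * (1 / D2)) * c = g"
      unfolding g_def D2_def[symmetric] by (rule gam_aux[OF nz2 D2e[symmetric]])
    show ?thesis unfolding equicorr_EJ f1 EJ_minus_const f2 ..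
  qed
  have ge: "g = c * D1 / D2" unfolding g_def D1_def D2_def ..
  have nzg: "D1 + mm * g \<noteq> 0"
  proof -
    have "D1 + mm * g = D1 * (D2 + mm * c) / D2" using nz1 nz2 unfolding ge by (simp add: field_simps)
    then show ?thesis using nz1 nz2 nz3 by simp
  qed
  have inv2: "matrix_inv (EJ (1 - c) g :: real^'b^'b) = EJ (1 / (1 - c)) (- c / ((1 - c) * (1 + (k + mm - 1) * c)))"
  proof -
    have "matrix_inv (EJ (1 - c) g :: real^'b^'b) = EJ (1/(1 - c)) (- g / ((1 - c) * ((1 - c) + mm * g)))"
      using EJ_inv[of "1 - c" g, where 'n='b] nz1 nzg unfolding mm_def D1_def by simp
    moreover have "- g / ((1 - c) * ((1 - c) + mm * g)) = - c / ((1 - c) * (1 + (k + mm - 1) * c))"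
    proof -
      have "- g / (D1 * (D1 + mm * g)) = - c / (D1 * (D2 + mm * c))"
        by (rule binv_aux[OF nz1 nz2 nz3 ge])
      moreover have "D2 + mm * c = 1 + (k + mm - 1) * c" unfolding D2_def by (simp add: algebra_simps)
      ultimately show ?thesis unfolding D1_def by simp
    qed
    ultimately show ?thesis by simp
  qed
  have Sset: "{v :: real^'b. \<forall>i. \<bar>v $ i\<bar> \<le> lam * sqrt n} = {x. \<forall>i. x$i \<in> {- (lam * sqrt n)..lam * sqrt n}}"
  proof (intro Collect_cong iffI allI)
    fix x :: "real^'b" and i
    assume "\<forall>i. \<bar>x $ i\<bar> \<le> lam * sqrt n"
    then have "\<bar>x $ i\<bar> \<le> lam * sqrt n" by blast
    then show "x $ i \<in> {- (lam * sqrt n)..lam * sqrt n}" by (simp add: abs_le_iff)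
  next
    fix x :: "real^'b" and i
    assume "\<forall>i. x $ i \<in> {- (lam * sqrt n)..lam * sqrt n}"
    then have "x $ i \<in> {- (lam * sqrt n)..lam * sqrt n}" by blast
    then show "\<bar>x $ i\<bar> \<le> lam * sqrt n" by (simp add: abs_le_iff)
  qed
  have "PI n lam c (\<chi> i::'a. 1) TYPE('b) = mvn_prob (\<chi> i::'b. lam * sqrt n * k * c / (1 + (k - 1) * c)) (EJ (1 - c) g)
      {x. \<forall>i. x$i \<in> {- (lam * sqrt n)..lam * sqrt n}}"
    unfolding PI_def Let_def inv1 mu Sig Sset ..
  also have "\<dots> = (\<integral>x. indicator {x::real^'b. \<forall>i. x$i \<in> {- (lam * sqrt n)..lam * sqrt n}} x *
        exp (- Qf (1 / (1 - c)) (- c / ((1 - c) * (1 + (k + mm - 1) * c))) (lam * sqrt n * k * c / (1 + (k - 1) * c)) x / 2) \<partial>lborel)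
    / sqrt ((2 * pi) ^ CARD('b) * det (EJ (1 - c) g :: real^'b^'b))"
    by (rule mvn_prob_EJ[OF inv2 refl])
  finally show ?thesis unfolding g_def .
qed

lemma prod_set_borel: "(T::real set) \<in> sets borel \<Longrightarrow> {x::real^'n. \<forall>i. x$i \<in> T} \<in> sets borel"
proof -
  assume T: "T \<in> sets borel"
  have "{x::real^'n. \<forall>i. x$i \<in> T} = (\<Inter>i. (\<lambda>x. x$i) -` T)" by auto
  also have "\<dots> \<in> sets borel"
    using T by (intro sets.countable_INT) (auto intro!: measurable_sets_borel[where f="\<lambda>x::real^'n. x$i" for i])
  finally show ?thesis .
qed

lemma F0_value:
  fixes T :: "real set" and m0 :: real
  assumes T: "T \<in> sets borel"
  shows "(\<integral>x. indicator {x. \<forall>i. x$i \<in> T} x * exp (- Qf 1 0 m0 x / 2) \<partial>(lborel :: (real^'n) measure))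
       = (\<integral>t. indicator T t * exp (- ((t - m0)^2) / 2) \<partial>lborel) ^ CARD('n)"
proof -
  define p0 where "p0 = (\<lambda>t::real. indicator T t * exp (- ((t - m0)^2) / 2))"
  have ip0: "integrable lborel p0" unfolding p0_def by (rule integrable_phi(1)[OF T])
  have pw: "indicator {x. \<forall>i. x$i \<in> T} x * exp (- Qf 1 0 m0 x / 2) = (\<Prod>l\<in>UNIV. p0 (x$l))" for x :: "real^'n"
  proof -
    have "(\<Prod>l\<in>UNIV. p0 (x$l)) = (\<Prod>l\<in>UNIV. indicator T (x$l)) * (\<Prod>l\<in>UNIV. exp (- ((x$l - m0)^2) / 2))"
      unfolding p0_def by (rule prod.distrib)
    also have "(\<Prod>l\<in>UNIV. indicator T (x$l)) = (indicator {x. \<forall>i. x$i \<in> T} x :: real)"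
    proof (cases "\<forall>i. x$i \<in> T")
      case True then show ?thesis by (simp add: indicator_def)
    next
      case False
      then obtain i where "x$i \<notin> T" by auto
      then have "(\<Prod>l\<in>UNIV. indicator T (x$l) :: real) = 0"
        by (intro prod_zero) (auto intro!: exI[of _ i])
      then show ?thesis using False by (simp add: indicator_def)
    qed
    also have "(\<Prod>l\<in>UNIV. exp (- ((x$l - m0)^2) / 2)) = exp (- Qf 1 0 m0 x / 2)"
      by (simp add: Qf_def qv_def exp_sum[symmetric] sum_negf[symmetric] sum_divide_distrib)
    finally show ?thesis by simp
  qed
  have "(\<integral>x. indicator {x. \<forall>i. x$i \<in> T} x * exp (- Qf 1 0 m0 x / 2) \<partial>(lborel :: (real^'n) measure))
      = (\<integral>x. (\<Prod>l\<in>UNIV. p0 (x$l)) \<partial>(lborel :: (real^'n) measure))"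
    by (simp only: pw)
  also have "\<dots> = (\<Prod>l\<in>(UNIV::'n set). integral\<^sup>L lborel p0)"
    by (rule integral_vec_prod(2)) (rule ip0)
  finally show ?thesis by (simp add: p0_def)
qed

lemma d_lin_quot: "1 + a * c \<noteq> 0 \<Longrightarrow> ((\<lambda>c. u / (1 + a * c)) has_real_derivative
   (0 * (1 + a * c) - u * (0 + a * 1)) / ((1 + a * c) * (1 + a * c))) (at c)"
  by (rule DERIV_divide[OF DERIV_const DERIV_add[OF DERIV_const DERIV_cmult[OF DERIV_ident]]])

lemma d_lin_quot2: "1 + a * c \<noteq> 0 \<Longrightarrow> ((\<lambda>c. u * c / (1 + a * c)) has_real_derivative
   (u * 1 * (1 + a * c) - u * c * (0 + a * 1)) / ((1 + a * c) * (1 + a * c))) (at c)"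
  by (rule DERIV_divide[OF DERIV_cmult[OF DERIV_ident] DERIV_add[OF DERIV_const DERIV_cmult[OF DERIV_ident]]])

lemma d_recip: "1 - c \<noteq> 0 \<Longrightarrow> ((\<lambda>c. 1 / (1 - c)) has_real_derivative
   (0 * (1 - c) - 1 * (0 - 1)) / ((1 - c) * (1 - c))) (at c)"
  by (rule DERIV_divide[OF DERIV_const DERIV_diff[OF DERIV_const DERIV_ident]])

lemma d_BI: "(1 - c) * (1 + a * c) \<noteq> 0 \<Longrightarrow> ((\<lambda>c. - c / ((1 - c) * (1 + a * c))) has_real_derivative
   (- 1 * ((1 - c) * (1 + a * c)) - (- c) * ((0 - 1) * (1 + a * c) + (0 + a * 1) * (1 - c)))
     / (((1 - c) * (1 + a * c)) * ((1 - c) * (1 + a * c)))) (at c)"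
  by (rule DERIV_divide[OF DERIV_minus[OF DERIV_ident]
        DERIV_mult[OF DERIV_diff[OF DERIV_const DERIV_ident] DERIV_add[OF DERIV_const DERIV_cmult[OF DERIV_ident]]]])

lemma d_BS: "(1 - c) * (1 - c + a * c) \<noteq> 0 \<Longrightarrow> ((\<lambda>c. - c / ((1 - c) * (1 - c + a * c))) has_real_derivative
   (- 1 * ((1 - c) * (1 - c + a * c)) - (- c) * ((0 - 1) * (1 - c + a * c) + ((0 - 1) + a * 1) * (1 - c)))
     / (((1 - c) * (1 - c + a * c)) * ((1 - c) * (1 - c + a * c)))) (at c)"
  by (rule DERIV_divide[OF DERIV_minus[OF DERIV_ident]
        DERIV_mult[OF DERIV_diff[OF DERIV_const DERIV_ident] DERIV_add[OF DERIV_diff[OF DERIV_const DERIV_ident] DERIV_cmult[OF DERIV_ident]]]])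

lemma d_gI: "1 + a * c \<noteq> 0 \<Longrightarrow> ((\<lambda>c. c * (1 - c) / (1 + a * c)) has_real_derivative
   ((1 * (1 - c) + (0 - 1) * c) * (1 + a * c) - c * (1 - c) * (0 + a * 1)) / ((1 + a * c) * (1 + a * c))) (at c)"
  by (rule DERIV_divide[OF DERIV_mult[OF DERIV_ident DERIV_diff[OF DERIV_const DERIV_ident]]
        DERIV_add[OF DERIV_const DERIV_cmult[OF DERIV_ident]]])

lemma small_c:
  fixes k mm c :: real
  assumes c: "\<bar>c\<bar> * (2 * (k + mm)) < 1" and k1: "k \<ge> 1" and m1: "mm \<ge> 1"
  shows "1 - c > 0" "1 + (k - 1) * c > 0" "1 + (k + mm - 1) * c > 0" "1 - c + k * c > 0" "\<bar>c\<bar> * (2 * k) < 1"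
proof -
  have "\<bar>c\<bar> * (2 * (k + mm)) = 2 * (\<bar>c\<bar> * (k + mm))" by (simp add: algebra_simps)
  then have ac: "\<bar>c\<bar> * (k + mm) < 1/2" using c by linarith
  have "\<bar>c\<bar> * 1 \<le> \<bar>c\<bar> * (k + mm)" using k1 m1 by (intro mult_left_mono) auto
  then have c1: "\<bar>c\<bar> < 1/2" using ac by linarith
  have "\<bar>(k - 1) * c\<bar> \<le> \<bar>c\<bar> * (k + mm)" using k1 m1 by (simp add: abs_mult mult.commute mult_left_mono)
  then have ck: "\<bar>(k - 1) * c\<bar> < 1/2" using ac by linarith
  have "\<bar>(k + mm - 1) * c\<bar> \<le> \<bar>c\<bar> * (k + mm)" using k1 m1 by (simp add: abs_mult mult.commute mult_left_mono)
  then have ckm: "\<bar>(k + mm - 1) * c\<bar> < 1/2" using ac by linarith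
  have "\<bar>c\<bar> * k \<le> \<bar>c\<bar> * (k + mm)" using m1 by (intro mult_left_mono) auto
  then show "\<bar>c\<bar> * (2 * k) < 1" using ac by (simp add: algebra_simps)
  show "1 - c > 0" using c1 by (simp add: abs_less_iff)
  show p1: "1 + (k - 1) * c > 0" using ck by (simp add: abs_less_iff)
  show "1 + (k + mm - 1) * c > 0" using ckm by (simp add: abs_less_iff)
  have "1 - c + k * c = 1 + (k - 1) * c" by (simp add: algebra_simps)
  then show "1 - c + k * c > 0" using p1 by simp
qed

lemma small_c2:
  fixes k c :: real
  assumes c: "\<bar>c\<bar> * (2 * k) < 1" and k1: "k \<ge> 1"
  shows "1 - c > 0" "1 + (k - 1) * c > 0" "1 - c + k * c > 0"
proof -
  have ac: "\<bar>c\<bar> * k < 1/2" using c by (simp add: algebra_simps)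
  have "\<bar>c\<bar> * 1 \<le> \<bar>c\<bar> * k" using k1 by (intro mult_left_mono) auto
  then have c1: "\<bar>c\<bar> < 1/2" using ac by linarith
  have "\<bar>(k - 1) * c\<bar> = \<bar>c\<bar> * (k - 1)" using k1 by (simp add: abs_mult)
  also have "\<dots> \<le> \<bar>c\<bar> * k" by (intro mult_left_mono) auto
  finally have ck: "\<bar>(k - 1) * c\<bar> < 1/2" using ac by linarith
  show "1 - c > 0" using c1 by (simp add: abs_less_iff)
  show p1: "1 + (k - 1) * c > 0" using ck by (simp add: abs_less_iff)
  have "1 - c + k * c = 1 + (k - 1) * c" by (simp add: algebra_simps)
  then show "1 - c + k * c > 0" using p1 by simp
qed

lemma PS_deriv:
  fixes n :: nat and lam beta :: real
  assumes n1: "n \<ge> 1" and K2: "CARD('a::finite) \<ge> 2" and b0: "beta > 0" and l0: "lam > 0"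
    and hyp: "2 * (lam * sqrt n) >
           std_normal_density (sqrt n * (beta - lam)) / std_normal_cdf (sqrt n * (beta - lam))"
    and r0: "r0 > 0"
    and cr: "\<And>c. c \<in> {-r0<..<r0} \<Longrightarrow> \<bar>c\<bar> * (2 * real CARD('a)) < 1"
  shows "\<exists>DS>0. ((\<lambda>c. PS n lam c (\<chi> i::'a. beta)) has_real_derivative DS) (at 0)"
proof -
  define k where "k = real CARD('a)"
  define ln where "ln = lam * sqrt n"
  have sn: "sqrt n > 0" using n1 by simp
  have ln0: "ln > 0" unfolding ln_def using l0 sn by simp
  have k2: "k \<ge> 2" unfolding k_def using K2 by simp
  have k1: "k \<ge> 1" using k2 by simp
  have sm: "1 - c > 0" "1 + (k - 1) * c > 0" "1 - c + k * c > 0" if "c \<in> {-r0<..<r0}" for c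
    using small_c2[OF cr[OF that, folded k_def] k1] by simp_all
  define t0 where "t0 = sqrt n * beta"
  define SS where "SS = {x::real^'a. \<forall>i. x$i \<in> {..<t0}}"
  have SSb: "SS \<in> sets borel" unfolding SS_def by (rule prod_set_borel) simp
  define FS where "FS = (\<lambda>c. \<integral>x. indicator SS x * exp (- Qf (1 - c) c (ln / (1 + (k - 1) * c)) x / 2) \<partial>lborel)"
  define mS' where "mS' = (\<lambda>c::real. (0 * (1 + (k - 1) * c) - ln * (0 + (k - 1) * 1)) / ((1 + (k - 1) * c) * (1 + (k - 1) * c)))"
  have dFS0: "(FS has_real_derivative (\<integral>x. indicator SS x * (exp (- Qf (1 - 0) 0 (ln / (1 + (k - 1) * 0)) x / 2) *
         (- dQf (1 - 0) 0 (ln / (1 + (k - 1) * 0)) (0 - 1) 1 (mS' 0) x / 2)) \<partial>lborel)) (at 0)"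
    unfolding FS_def
  proof (rule deriv_integral'[where A="\<lambda>c. 1 - c" and B="\<lambda>c. c" and m="\<lambda>c. ln / (1 + (k - 1) * c)"
       and A'="\<lambda>c. 0 - 1" and B'="\<lambda>c. 1" and m'=mS', OF SSb r0])
    show "((\<lambda>c. 1 - c) has_real_derivative 0 - 1) (at c)" for c by (rule DERIV_diff[OF DERIV_const DERIV_ident])
    show "((\<lambda>c. c) has_real_derivative 1) (at c)" for c by (rule DERIV_ident)
    show "((\<lambda>c. ln / (1 + (k - 1) * c)) has_real_derivative mS' c) (at c)" if "c \<in> {-r0<..<r0}" for c
      unfolding mS'_def by (rule d_lin_quot) (use sm(2)[OF that] in simp)
    show "isCont (\<lambda>c. 0 - 1) 0" by simp
    show "isCont (\<lambda>c. 1) 0" by simp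
    show "isCont mS' 0" unfolding mS'_def by (intro continuous_intros) auto
  qed simp_all
  define DFS where "DFS = (\<integral>x. indicator SS x * (exp (- Qf 1 0 ln x / 2) * (- dQf 1 0 ln (- 1) 1 (- (ln * (k - 1))) x / 2)) \<partial>lborel)"
  have mS'0: "mS' 0 = - (ln * (k - 1))" unfolding mS'_def by simp
  have dFS: "(FS has_real_derivative DFS) (at 0)"
    using dFS0 unfolding DFS_def mS'0 by simp
  define I0 where "I0 = (\<integral>t. indicator {..<t0} t * exp (- ((t - ln)^2) / 2) \<partial>lborel)"
  define I1 where "I1 = (\<integral>t. indicator {..<t0} t * exp (- ((t - ln)^2) / 2) * (t - ln) \<partial>lborel)"
  have DFSv: "DFS = - 1 / 2 * (k * (k - 1) * I1^2 * I0^(CARD('a) - 2)) + (- (ln * (k - 1))) * (k * I1 * I0^(CARD('a) - 1))"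
    unfolding DFS_def SS_def I0_def I1_def k_def by (rule D_value) simp
  define tau where "tau = sqrt n * (beta - lam)"
  have tau: "t0 - ln = tau" unfolding t0_def ln_def tau_def by (simp add: algebra_simps)
  define G where "G = std_normal_cdf tau"
  define g where "g = std_normal_density tau"
  have G0: "G > 0" unfolding G_def by (rule std_normal_cdf_pos)
  have g0: "g > 0" unfolding g_def by (simp add: normal_density_pos)
  have I0v: "I0 = sqrt (2 * pi) * G" unfolding I0_def G_def using I0_halfline[of t0 ln] tau by simp
  have I1v: "I1 = - (sqrt (2 * pi) * g)"
    unfolding I1_def g_def using I1_halfline[of t0 ln] tau by (simp add: std_normal_density_def)
  have hypG: "g < 2 * ln * G"
  proof -
    have "g / G < 2 * ln" using hyp unfolding g_def G_def tau_def ln_def by simp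
    then show ?thesis using G0 by (simp add: pos_divide_less_eq)
  qed
  obtain j where j: "CARD('a) = j + 2" using K2 by (metis le_add_diff_inverse2)
  have ss: "sqrt (2 * pi) * sqrt (2 * pi) = 2 * pi" by simp
  have DFSe: "DFS = k * (k - 1) * I0^j * (2 * pi * g * (ln * G - g / 2))"
  proof -
    have "DFS = - 1 / 2 * (k * (k - 1) * (sqrt (2 * pi) * g)^2 * I0^j) + (- (ln * (k - 1))) * (k * (- (sqrt (2 * pi) * g)) * (sqrt (2 * pi) * G * I0^j))"
      unfolding DFSv j I1v by (simp add: I0v)
    also have "\<dots> = k * (k - 1) * I0^j * ((sqrt (2 * pi) * sqrt (2 * pi)) * g * (ln * G - g / 2))"
      by (simp add: power2_eq_square algebra_simps)
    finally show ?thesis unfolding ss .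
  qed
  have DFS0: "DFS > 0"
  proof -
    have "I0 > 0" unfolding I0v using G0 by simp
    moreover have "ln * G - g / 2 > 0" using hypG by simp
    ultimately show ?thesis unfolding DFSe using k2 g0 by (simp add: mult_pos_pos)
  qed
  define detS where "detS = (\<lambda>c. det (EJ (1 / (1 - c)) (- c / ((1 - c) * (1 - c + k * c))) :: real^'a^'a))"
  have ddetS: "(detS has_real_derivative 0) (at 0)" and detS0: "detS 0 = 1"
  proof -
    have dd: "((\<lambda>c. 1 / (1 - c) + - c / ((1 - c) * (1 - c + k * c))) has_real_derivative 0) (at 0)"
      using DERIV_add[OF d_recip[of 0] d_BS[of 0 k]] by simp
    have db: "((\<lambda>c. - c / ((1 - c) * (1 - c + k * c))) has_real_derivative -1) (at 0)"
      using d_BS[of 0 k] by simp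
    show "(detS has_real_derivative 0) (at 0)" unfolding detS_def
      by (rule det_EJ_deriv(1)[where a="\<lambda>c. 1 / (1 - c)" and b="\<lambda>c. - c / ((1 - c) * (1 - c + k * c))", OF dd _ _ db]) simp_all
    show "detS 0 = 1" unfolding detS_def
      using det_EJ_deriv(2)[where a="\<lambda>c. 1 / (1 - c)" and b="\<lambda>c. - c / ((1 - c) * (1 - c + k * c))", OF dd _ _ db, where 'n='a]
      by simp
  qed
  define hS where "hS = (\<lambda>c. sqrt ((2 * pi) ^ CARD('a) * detS c))"
  have hS0: "hS 0 = sqrt ((2 * pi) ^ CARD('a))" unfolding hS_def detS0 by simp
  have hS0p: "hS 0 > 0" unfolding hS0 by simp
  have dhS: "(hS has_real_derivative 0) (at 0)"
  proof -
    have "((\<lambda>c. sqrt ((2 * pi) ^ CARD('a) * detS c)) has_real_derivative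
        inverse (sqrt ((2 * pi) ^ CARD('a) * detS 0)) / 2 * ((2 * pi) ^ CARD('a) * 0)) (at 0)"
      by (rule DERIV_chain2[OF DERIV_real_sqrt DERIV_cmult[OF ddetS]]) (simp add: detS0)
    then show ?thesis unfolding hS_def by simp
  qed
  have dPS0: "((\<lambda>c. FS c / hS c) has_real_derivative (DFS * hS 0 - FS 0 * 0) / (hS 0 * hS 0)) (at 0)"
    by (rule DERIV_divide[OF dFS dhS]) (use hS0p in simp)
  have ev: "\<forall>\<^sub>F c in nhds 0. PS n lam c (\<chi> i::'a. beta) = FS c / hS c"
    unfolding eventually_nhds_metric
  proof (intro exI[of _ r0] conjI allI impI r0)
    fix c :: real assume "dist c 0 < r0"
    then have c: "c \<in> {-r0<..<r0}" by (auto simp: dist_real_def)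
    show "PS n lam c (\<chi> i::'a. beta) = FS c / hS c"
      unfolding FS_def hS_def detS_def SS_def t0_def ln_def k_def
      by (rule PS_form[OF b0 cr[OF c]])
  qed
  have "((\<lambda>c. PS n lam c (\<chi> i::'a. beta)) has_real_derivative DFS / hS 0) (at 0)"
    using dPS0 unfolding DERIV_cong_ev[OF refl ev refl] using hS0p by (simp add: field_simps)
  moreover have "DFS / hS 0 > 0" using DFS0 hS0p by simp
  ultimately show ?thesis by blast
qed

lemma PI_deriv:
  fixes n :: nat and lam :: real
  assumes n1: "n \<ge> 1" and l0: "lam > 0"
    and r0: "r0 > 0"
    and cr: "\<And>c. c \<in> {-r0<..<r0} \<Longrightarrow> \<bar>c\<bar> * (2 * (real CARD('a::finite) + real CARD('b::finite))) < 1"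
  shows "((\<lambda>c. PI n lam c (\<chi> i::'a. 1) TYPE('b)) has_real_derivative 0) (at 0)"
    and "PI n lam 0 (\<chi> i::'a. 1) TYPE('b) > 0"
proof -
  define k where "k = real CARD('a)"
  define mm where "mm = real CARD('b)"
  define ln where "ln = lam * sqrt n"
  have sn: "sqrt n > 0" using n1 by simp
  have ln0: "ln > 0" unfolding ln_def using l0 sn by simp
  have k1: "k \<ge> 1" unfolding k_def by simp
  have m1: "mm \<ge> 1" unfolding mm_def by simp
  have sm: "1 - c > 0" "1 + (k - 1) * c > 0" "1 + (k + mm - 1) * c > 0" if "c \<in> {-r0<..<r0}" for c
    using small_c[OF cr[OF that, folded k_def mm_def] k1 m1] by simp_all
  define SI where "SI = {x::real^'b. \<forall>i. x$i \<in> {- ln..ln}}"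
  have SIb: "SI \<in> sets borel" unfolding SI_def by (rule prod_set_borel) simp
  define FI where "FI = (\<lambda>c. \<integral>x. indicator SI x * exp (- Qf (1 / (1 - c)) (- c / ((1 - c) * (1 + (k + mm - 1) * c)))
        (ln * k * c / (1 + (k - 1) * c)) x / 2) \<partial>lborel)"
  define A' where "A' = (\<lambda>c::real. (0 * (1 - c) - 1 * (0 - 1)) / ((1 - c) * (1 - c)))"
  define B' where "B' = (\<lambda>c::real. (- 1 * ((1 - c) * (1 + (k + mm - 1) * c)) - (- c) * ((0 - 1) * (1 + (k + mm - 1) * c) + (0 + (k + mm - 1) * 1) * (1 - c)))
     / (((1 - c) * (1 + (k + mm - 1) * c)) * ((1 - c) * (1 + (k + mm - 1) * c))))"
  define m' where "m' = (\<lambda>c::real. (ln * k * 1 * (1 + (k - 1) * c) - ln * k * c * (0 + (k - 1) * 1)) / ((1 + (k - 1) * c) * (1 + (k - 1) * c)))"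
  have dFI0: "(FI has_real_derivative (\<integral>x. indicator SI x * (exp (- Qf (1 / (1 - 0)) (- 0 / ((1 - 0) * (1 + (k + mm - 1) * 0)))
        (ln * k * 0 / (1 + (k - 1) * 0)) x / 2) *
         (- dQf (1 / (1 - 0)) (- 0 / ((1 - 0) * (1 + (k + mm - 1) * 0))) (ln * k * 0 / (1 + (k - 1) * 0)) (A' 0) (B' 0) (m' 0) x / 2)) \<partial>lborel)) (at 0)"
    unfolding FI_def
  proof (rule deriv_integral'[where A="\<lambda>c. 1 / (1 - c)" and B="\<lambda>c. - c / ((1 - c) * (1 + (k + mm - 1) * c))"
       and m="\<lambda>c. ln * k * c / (1 + (k - 1) * c)" and A'=A' and B'=B' and m'=m', OF SIb r0])
    show "((\<lambda>c. 1 / (1 - c)) has_real_derivative A' c) (at c)" if "c \<in> {-r0<..<r0}" for c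
      unfolding A'_def by (rule d_recip) (use sm(1)[OF that] in simp)
    show "((\<lambda>c. - c / ((1 - c) * (1 + (k + mm - 1) * c))) has_real_derivative B' c) (at c)" if "c \<in> {-r0<..<r0}" for c
      unfolding B'_def by (rule d_BI) (use sm(1,3)[OF that] in simp)
    show "((\<lambda>c. ln * k * c / (1 + (k - 1) * c)) has_real_derivative m' c) (at c)" if "c \<in> {-r0<..<r0}" for c
      unfolding m'_def by (rule d_lin_quot2) (use sm(2)[OF that] in simp)
    show "isCont A' 0" unfolding A'_def by (intro continuous_intros) auto
    show "isCont B' 0" unfolding B'_def by (intro continuous_intros) auto
    show "isCont m' 0" unfolding m'_def by (intro continuous_intros) auto
  qed simp_all
  have A'0: "A' 0 = 1" unfolding A'_def by simp
  have B'0: "B' 0 = - 1" unfolding B'_def by simp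
  have m'0: "m' 0 = ln * k" unfolding m'_def by simp
  have I1: "(\<integral>t. indicator {- ln..ln} t * exp (- ((t - 0)^2) / 2) * (t - 0) \<partial>lborel) = 0"
    by (rule I1_sym)
  have DFI: "(\<integral>x. indicator SI x * (exp (- Qf 1 0 0 x / 2) * (- dQf 1 0 0 (- (- 1)) (- 1) (ln * k) x / 2)) \<partial>lborel) = 0"
    unfolding SI_def D_value[OF atLeastAtMost_borel] I1 by simp
  have dFI: "(FI has_real_derivative 0) (at 0)"
    using dFI0 DFI unfolding A'0 B'0 m'0 by simp
  have FI0: "FI 0 > 0"
  proof -
    have "FI 0 = (\<integral>x. indicator SI x * exp (- Qf 1 0 0 x / 2) \<partial>lborel)" unfolding FI_def by simp
    also have "\<dots> = (\<integral>t. indicator {- ln..ln} t * exp (- ((t - 0)^2) / 2) \<partial>lborel) ^ CARD('b)"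
      unfolding SI_def by (rule F0_value) simp
    finally show ?thesis using I0_sym_pos[OF ln0] by simp
  qed
  define detI where "detI = (\<lambda>c. det (EJ (1 - c) (c * (1 - c) / (1 + (k - 1) * c)) :: real^'b^'b))"
  have ddetI: "(detI has_real_derivative 0) (at 0)" and detI0: "detI 0 = 1"
  proof -
    have dd: "((\<lambda>c. (1 - c) + c * (1 - c) / (1 + (k - 1) * c)) has_real_derivative 0) (at 0)"
      using DERIV_add[OF DERIV_diff[OF DERIV_const DERIV_ident] d_gI[of "k - 1" 0]] by simp
    have db: "((\<lambda>c. c * (1 - c) / (1 + (k - 1) * c)) has_real_derivative 1) (at 0)"
      using d_gI[of "k - 1" 0] by simp
    show "(detI has_real_derivative 0) (at 0)" unfolding detI_def
      by (rule det_EJ_deriv(1)[where a="\<lambda>c. 1 - c" and b="\<lambda>c. c * (1 - c) / (1 + (k - 1) * c)", OF dd _ _ db]) simp_all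
    show "detI 0 = 1" unfolding detI_def
      using det_EJ_deriv(2)[where a="\<lambda>c. 1 - c" and b="\<lambda>c. c * (1 - c) / (1 + (k - 1) * c)", OF dd _ _ db, where 'n='b]
      by simp
  qed
  define hI where "hI = (\<lambda>c. sqrt ((2 * pi) ^ CARD('b) * detI c))"
  have hI0: "hI 0 = sqrt ((2 * pi) ^ CARD('b))" unfolding hI_def detI0 by simp
  have hI0p: "hI 0 > 0" unfolding hI0 by simp
  have dhI: "(hI has_real_derivative 0) (at 0)"
  proof -
    have "((\<lambda>c. sqrt ((2 * pi) ^ CARD('b) * detI c)) has_real_derivative
        inverse (sqrt ((2 * pi) ^ CARD('b) * detI 0)) / 2 * ((2 * pi) ^ CARD('b) * 0)) (at 0)"
      by (rule DERIV_chain2[OF DERIV_real_sqrt DERIV_cmult[OF ddetI]]) (simp add: detI0)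
    then show ?thesis unfolding hI_def by simp
  qed
  have dPI0: "((\<lambda>c. FI c / hI c) has_real_derivative (0 * hI 0 - FI 0 * 0) / (hI 0 * hI 0)) (at 0)"
    by (rule DERIV_divide[OF dFI dhI]) (use hI0p in simp)
  have eqI: "PI n lam c (\<chi> i::'a. 1) TYPE('b) = FI c / hI c" if c: "c \<in> {-r0<..<r0}" for c
    unfolding FI_def hI_def detI_def SI_def ln_def k_def mm_def
    by (rule PI_form[OF cr[OF c]])
  have ev: "\<forall>\<^sub>F c in nhds 0. PI n lam c (\<chi> i::'a. 1) TYPE('b) = FI c / hI c"
    unfolding eventually_nhds_metric
  proof (intro exI[of _ r0] conjI allI impI r0)
    fix c :: real assume "dist c 0 < r0"
    then have c: "c \<in> {-r0<..<r0}" by (auto simp: dist_real_def)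
    show "PI n lam c (\<chi> i::'a. 1) TYPE('b) = FI c / hI c" by (rule eqI[OF c])
  qed
  show "((\<lambda>c. PI n lam c (\<chi> i::'a. 1) TYPE('b)) has_real_derivative 0) (at 0)"
    using dPI0 unfolding DERIV_cong_ev[OF refl ev refl] by simp
  have "0 \<in> {-r0<..<r0}" using r0 by simp
  then show "PI n lam 0 (\<chi> i::'a. 1) TYPE('b) > 0"
    using eqI FI0 hI0p by simp
qed

theorem theorem2:
  fixes n :: nat and lam beta :: real
  assumes "n \<ge> 1"
    and "CARD('a::finite) \<ge> 2"
    and "beta > 0" and "lam > 0"
    and "2 * (lam * sqrt n) >
           std_normal_density (sqrt n * (beta - lam)) / std_normal_cdf (sqrt n * (beta - lam))"
  shows "(\<exists>D. ((\<lambda>c. psi TYPE('a) TYPE('b::finite) n lam beta c) has_real_derivative D) (at 0) \<and> D > 0)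
     \<and> (\<exists>cl. 0 < cl \<and> cl < 1 \<and>
            psi TYPE('a) TYPE('b) n lam beta cl > psi TYPE('a) TYPE('b) n lam beta 0)"
proof -
  define k where "k = real CARD('a)"
  define mm where "mm = real CARD('b)"
  have k1: "k \<ge> 1" unfolding k_def by simp
  have m1: "mm \<ge> 1" unfolding mm_def by simp
  define r0 where "r0 = 1 / (2 * (k + mm))"
  have r0: "r0 > 0" unfolding r0_def using k1 m1 by simp
  have crI: "\<bar>c\<bar> * (2 * (k + mm)) < 1" if "c \<in> {-r0<..<r0}" for c
  proof -
    have "\<bar>c\<bar> < r0" using that by auto
    then have "\<bar>c\<bar> * (2 * (k + mm)) < r0 * (2 * (k + mm))" using k1 m1 by (intro mult_strict_right_mono) auto
    also have "r0 * (2 * (k + mm)) = 1" unfolding r0_def using k1 m1 by simp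
    finally show ?thesis .
  qed
  have crS: "\<bar>c\<bar> * (2 * k) < 1" if "c \<in> {-r0<..<r0}" for c
  proof -
    have "\<bar>c\<bar> * (2 * k) \<le> \<bar>c\<bar> * (2 * (k + mm))" using m1 by (intro mult_left_mono) auto
    then show ?thesis using crI[OF that] by linarith
  qed
  obtain DS where DS: "DS > 0" and dPS: "((\<lambda>c. PS n lam c (\<chi> i::'a. beta)) has_real_derivative DS) (at 0)"
    using PS_deriv[OF assms r0 crS[unfolded k_def]] by blast
  have dPI: "((\<lambda>c. PI n lam c (\<chi> i::'a. 1) TYPE('b)) has_real_derivative 0) (at 0)"
    and PI0: "PI n lam 0 (\<chi> i::'a. 1) TYPE('b) > 0"
    using PI_deriv[OF assms(1) assms(4) r0 crI[unfolded k_def mm_def]] by blast+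
  have psi_eq: "psi TYPE('a) TYPE('b) n lam beta c = PS n lam c (\<chi> i::'a. beta) * PI n lam c (\<chi> i::'a. 1) TYPE('b)" for c
    by (simp add: psi_def)
  have dpsi: "((\<lambda>c. psi TYPE('a) TYPE('b) n lam beta c) has_real_derivative
      DS * PI n lam 0 (\<chi> i::'a. 1) TYPE('b) + 0 * PS n lam 0 (\<chi> i::'a. beta)) (at 0)"
    unfolding psi_eq by (rule DERIV_mult[OF dPS dPI])
  define D where "D = DS * PI n lam 0 (\<chi> i::'a. 1) TYPE('b)"
  have D0: "D > 0" unfolding D_def using DS PI0 by simp
  have dpsi': "((\<lambda>c. psi TYPE('a) TYPE('b) n lam beta c) has_real_derivative D) (at 0)"
    using dpsi unfolding D_def by simp
  obtain d where d: "d > 0" and inc: "\<And>h. h > 0 \<Longrightarrow> h < d \<Longrightarrow>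
      psi TYPE('a) TYPE('b) n lam beta 0 < psi TYPE('a) TYPE('b) n lam beta (0 + h)"
    using DERIV_pos_inc_right[OF dpsi' D0] by blast
  define cl where "cl = min (d / 2) (1 / 2)"
  have cl: "0 < cl" "cl < 1" "cl < d" unfolding cl_def using d by auto
  have "psi TYPE('a) TYPE('b) n lam beta cl > psi TYPE('a) TYPE('b) n lam beta 0"
    using inc[OF cl(1) cl(3)] by simp
  then show ?thesis using dpsi' D0 cl(1,2) by blast
qed

end
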